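(* In the QiSVD setup, assume (E1) and (E2) hold, and put $\beta=\omega/(4k+3)$. Then $\sigma_k>0$, so that $\hat U=SV\Sigma^{-1}$ is well defined, and $$\|\hat U^T\hat U-I\|\le\|\hat U^T\hat U-I\|_F\le\beta,\qquad \|\hat U^T\hat U\|\le 1+\beta,\qquad \|\hat U\|\le\sqrt{1+\beta},\qquad \|\hat U\|_F\le\sqrt{k(1+\beta)},$$ where $I$ is the $k\times k$ identity matrix.
   Context: QiSVD setup. Let $A\in\mathbb{R}^{m\times n}$ be a nonzero matrix of rank $r$. For a nonzero matrix $B$, $\sigma_{\min}(B)$ denotes its smallest nonzero singular value, and $\kappa=\|A\|/\sigma_{\min}(A)$, where $\|\cdot\|$ is the spectral norm and $\|\cdot\|_F$ the Frobenius norm. Let $k$ be an integer with $1\le k\le r$, and let $\epsilon,\delta\in(0,1)$. Put $$\omega=\frac{\|A\|^2\epsilon^2}{196(\|A\|_F\kappa+\|A\|)^2},$$ fix $\theta\in\Big(0,\frac{\omega\|A\|^2}{(4k+3+2\omega)\kappa^2\|A\|_F^2}\Big]$, and let $p=\lceil 1/(\theta^2\delta)\rceil$. Sample column indices $j_1,\dots,j_p$ i.i.d. from $[n]$ with $\Pr(j)=P_j=\|A_{:,j}\|^2/\|A\|_F^2$. Let $S\in\mathbb{R}^{m\times p}$ have columns $S_{:,t}=A_{:,j_t}/\sqrt{pP_{j_t}}$. Then sample row indices $i_1,\dots,i_p$ i.i.d. from $[m]$ with $\Pr(i)=P'_i=\|S_{i,:}\|^2/\|S\|_F^2$. Let $W\in\mathbb{R}^{p\times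 p}$ have rows $W_{t,:}=S_{i_t,:}/\sqrt{pP'_{i_t}}$. Let $\sigma_1\ge\dots\ge\sigma_k$ be the $k$ largest singular values of $W$, and let $v_1,\dots,v_k$ be corresponding orthonormal right singular vectors. Set $V=(v_1,\dots,v_k)\in\mathbb{R}^{p\times k}$, $\Sigma=\mathrm{diag}(\sigma_1,\dots,\sigma_k)$, and, when $\sigma_k>0$, $$\hat U=SV\Sigma^{-1}\in\mathbb{R}^{m\times k}.$$ The events used are - (E1): $\|AA^T-SS^T\|_F\le\theta\|A\|_F^2$; - (E2): $\|S^TS-W^TW\|_F\le\theta\|S\|_F^2$. By the column/row sampling lemmas and the choice of $p$, each of these events holds with probability at least $1-\delta$. *)

theory Defs
  imports Complex_Main "Jordan_Normal_Form.Jordan_Normal_Form" "Jordan_Normal_Form.DL_Rank"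
begin

definition vec_norm :: "real vec \<Rightarrow> real" where
  "vec_norm v = sqrt (\<Sum>i<dim_vec v. (v $ i)^2)"

definition spec_norm :: "real mat \<Rightarrow> real" where
  "spec_norm A = Sup {vec_norm (A *\<^sub>v x) | x. x \<in> carrier_vec (dim_col A) \<and> vec_norm x = 1}"

definition frob_norm :: "real mat \<Rightarrow> real" where
  "frob_norm A = sqrt (\<Sum>i<dim_row A. \<Sum>j<dim_col A. (A $$ (i,j))^2)"

definition sing_vals :: "real mat \<Rightarrow> real set" where
  "sing_vals A = {s. s \<ge> 0 \<and> eigenvalue (transpose_mat A * A) (s^2)}"

definition sigma_min :: "real mat \<Rightarrow> real" where
  "sigma_min A = Min {s \<in> sing_vals A. s > 0}"

definition cond_num :: "real mat \<Rightarrow> real" where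
  "cond_num A = spec_norm A / sigma_min A"

definition col_prob :: "real mat \<Rightarrow> nat \<Rightarrow> real" where
  "col_prob A j = (\<Sum>i<dim_row A. (A $$ (i,j))^2) / (frob_norm A)^2"

definition row_prob :: "real mat \<Rightarrow> nat \<Rightarrow> real" where
  "row_prob S i = (\<Sum>t<dim_col S. (S $$ (i,t))^2) / (frob_norm S)^2"

definition sample_cols :: "real mat \<Rightarrow> nat \<Rightarrow> (nat \<Rightarrow> nat) \<Rightarrow> real mat" where
  "sample_cols A p js = mat (dim_row A) p
     (\<lambda>(a,t). A $$ (a, js t) / sqrt (real p * col_prob A (js t)))"

definition sample_rows :: "real mat \<Rightarrow> nat \<Rightarrow> (nat \<Rightarrow> nat) \<Rightarrow> real mat" where
  "sample_rows S p ix = mat p (dim_col S)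
     (\<lambda>(t,b). S $$ (ix t, b) / sqrt (real p * row_prob S (ix t)))"

end

theory Submission
  imports Defs
begin

declare col_mult[simp del]


lemma CS_sum:
  fixes a b :: "nat \<Rightarrow> real"
  shows "(\<Sum>i\<in>I. a i * b i)^2 \<le> (\<Sum>i\<in>I. (a i)^2) * (\<Sum>i\<in>I. (b i)^2)"
proof (cases "finite I")
  case fin: True
  define A where "A = (\<Sum>i\<in>I. (a i)^2)"
  define B where "B = (\<Sum>i\<in>I. (b i)^2)"
  define C where "C = (\<Sum>i\<in>I. a i * b i)"
  have A0: "A \<ge> 0" unfolding A_def by (simp add: sum_nonneg)
  show ?thesis
  proof (cases "A = 0")
    case True
    then have "\<forall>i\<in>I. (a i)^2 = 0" using fin unfolding A_def
      by (subst sum_nonneg_eq_0_iff[symmetric]) auto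
    then have "C = 0" unfolding C_def by simp
    then show ?thesis using True by (simp add: A_def C_def)
  next
    case False
    have "0 \<le> (\<Sum>i\<in>I. (A * b i - C * a i)^2)" by (simp add: sum_nonneg)
    also have "\<dots> = (\<Sum>i\<in>I. A^2 * (b i)^2 - 2*A*C*(a i * b i) + C^2 * (a i)^2)"
      by (rule sum.cong) (auto simp: power2_eq_square algebra_simps)
    also have "\<dots> = A^2 * B - 2*A*C*C + C^2*A"
      by (simp add: sum.distrib sum_subtractf sum_distrib_left[symmetric] A_def B_def C_def)
    also have "\<dots> = A * (A*B - C^2)" by (simp add: power2_eq_square algebra_simps)
    finally have "0 \<le> A * (A*B - C^2)" .
    then have "0 \<le> A*B - C^2" using A0 False
      by (simp add: zero_le_mult_iff)
    then show ?thesis by (simp add: A_def B_def C_def)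
  qed
qed simp

lemma sp_self_sum: "v \<bullet> (v::real vec) = (\<Sum>i<dim_vec v. (v$i)^2)"
  by (simp add: scalar_prod_def power2_eq_square atLeast0LessThan)

lemma sp_self_nonneg: "0 \<le> v \<bullet> (v::real vec)"
  unfolding sp_self_sum by (rule sum_nonneg) simp

lemma vec_norm_sq: "(vec_norm v)^2 = v \<bullet> (v::real vec)"
  unfolding vec_norm_def sp_self_sum by (simp add: sum_nonneg)

lemma vec_norm_def2: "vec_norm v = sqrt (v \<bullet> (v::real vec))"
  unfolding vec_norm_def sp_self_sum ..

lemma vec_norm_nonneg: "0 \<le> vec_norm v"
  unfolding vec_norm_def2 using sp_self_nonneg by simp

lemma sp_self_zero: assumes "v \<in> carrier_vec n" "v \<bullet> (v::real vec) = 0" shows "v = 0\<^sub>v n"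
proof -
  have "\<forall>i\<in>{..<dim_vec v}. (v$i)^2 = 0" using assms(2) unfolding sp_self_sum
    by (subst sum_nonneg_eq_0_iff[symmetric]) auto
  then show ?thesis using assms(1) by (auto intro!: eq_vecI)
qed

lemma CS_vec: assumes "v \<in> carrier_vec n" "w \<in> carrier_vec n"
  shows "(v \<bullet> w)^2 \<le> (v \<bullet> v) * (w \<bullet> (w::real vec))"
proof -
  have "v \<bullet> w = (\<Sum>i<n. v$i * w$i)" using assms by (simp add: scalar_prod_def atLeast0LessThan)
  moreover have "v \<bullet> v = (\<Sum>i<n. (v$i)^2)" "w \<bullet> w = (\<Sum>i<n. (w$i)^2)" using assms by (simp_all add: sp_self_sum)
  ultimately show ?thesis using CS_sum by simp
qed

lemma CS_vec_abs: assumes "v \<in> carrier_vec n" "w \<in> carrier_vec n"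
  shows "\<bar>v \<bullet> w\<bar> \<le> vec_norm v * vec_norm (w::real vec)"
proof -
  have "\<bar>v \<bullet> w\<bar> = sqrt ((v \<bullet> w)^2)" by simp
  also have "\<dots> \<le> sqrt ((v \<bullet> v) * (w \<bullet> w))" using CS_vec[OF assms] by (rule real_sqrt_le_mono)
  also have "\<dots> = vec_norm v * vec_norm w" by (simp add: vec_norm_def2 real_sqrt_mult)
  finally show ?thesis .
qed

lemma sp_add_self: assumes "v \<in> carrier_vec n" "w \<in> carrier_vec n"
  shows "(v + w) \<bullet> (v + w) = v \<bullet> v + 2 * (v \<bullet> w) + w \<bullet> (w::real vec)"
proof -
  have "(v + w) \<bullet> (v + w) = (\<Sum>i\<in>{0..<n}. (v$i + w$i) * (v$i + w$i))" using assms by (simp add: scalar_prod_def)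
  also have "\<dots> = (\<Sum>i\<in>{0..<n}. v$i*v$i + 2*(v$i*w$i) + w$i*w$i)"
    by (rule sum.cong) (auto simp: algebra_simps)
  also have "\<dots> = v \<bullet> v + 2 * (v \<bullet> w) + w \<bullet> w" using assms by (simp add: scalar_prod_def sum.distrib sum_distrib_left)
  finally show ?thesis .
qed

lemma vec_norm_triangle: assumes "v \<in> carrier_vec n" "w \<in> carrier_vec n"
  shows "vec_norm (v + w) \<le> vec_norm v + vec_norm (w::real vec)"
proof -
  have "(vec_norm (v + w))^2 = v \<bullet> v + 2 * (v \<bullet> w) + w \<bullet> w" using sp_add_self[OF assms] vec_norm_sq by simp
  also have "\<dots> \<le> (vec_norm v)^2 + 2 * (vec_norm v * vec_norm w) + (vec_norm w)^2"
    using CS_vec_abs[OF assms] by (simp add: vec_norm_sq)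
  also have "\<dots> = (vec_norm v + vec_norm w)^2" by (simp add: power2_eq_square algebra_simps)
  finally show ?thesis using vec_norm_nonneg
    by (meson add_nonneg_nonneg power2_le_imp_le)
qed

definition fro2 :: "real mat \<Rightarrow> real" where
  "fro2 A = (\<Sum>i<dim_row A. \<Sum>j<dim_col A. (A $$ (i,j))^2)"

lemma fro2_nonneg: "0 \<le> fro2 A" unfolding fro2_def by (intro sum_nonneg) simp

lemma frob_fro2: "frob_norm A = sqrt (fro2 A)" unfolding frob_norm_def fro2_def ..

lemma frob_sq: "(frob_norm A)^2 = fro2 A" unfolding frob_fro2 using fro2_nonneg by simp

lemma frob_nonneg: "0 \<le> frob_norm A" unfolding frob_fro2 using fro2_nonneg by simp

lemma mat_vec_sq_bound: assumes "M \<in> carrier_mat r c" "x \<in> carrier_vec c"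
  shows "(M *\<^sub>v x) \<bullet> (M *\<^sub>v x) \<le> fro2 M * (x \<bullet> (x::real vec))"
proof -
  have "(M *\<^sub>v x) \<bullet> (M *\<^sub>v x) = (\<Sum>i<r. (row M i \<bullet> x)^2)" using assms by (simp add: sp_self_sum)
  also have "\<dots> \<le> (\<Sum>i<r. (row M i \<bullet> row M i) * (x \<bullet> x))"
    by (rule sum_mono, rule CS_vec) (use assms in auto)
  also have "\<dots> = (\<Sum>i<r. (row M i \<bullet> row M i)) * (x \<bullet> x)" by (simp add: sum_distrib_right)
  also have "(\<Sum>i<r. (row M i \<bullet> row M i)) = fro2 M" using assms
    by (auto simp: fro2_def sp_self_sum intro!: sum.cong)
  finally show ?thesis .
qed

lemma mat_vec_norm_bound: assumes "M \<in> carrier_mat r c" "x \<in> carrier_vec c"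
  shows "vec_norm (M *\<^sub>v x) \<le> frob_norm M * vec_norm x"
proof -
  have "vec_norm (M *\<^sub>v x) = sqrt ((M *\<^sub>v x) \<bullet> (M *\<^sub>v x))" by (simp add: vec_norm_def2)
  also have "\<dots> \<le> sqrt (fro2 M * (x \<bullet> x))" using mat_vec_sq_bound[OF assms] by (rule real_sqrt_le_mono)
  also have "\<dots> = frob_norm M * vec_norm x" by (simp add: frob_fro2 vec_norm_def2 real_sqrt_mult)
  finally show ?thesis .
qed

lemma quad_bound: assumes "M \<in> carrier_mat n n" "x \<in> carrier_vec n"
  shows "\<bar>x \<bullet> (M *\<^sub>v x)\<bar> \<le> frob_norm M * (x \<bullet> (x::real vec))"
proof -
  have "\<bar>x \<bullet> (M *\<^sub>v x)\<bar> \<le> vec_norm x * vec_norm (M *\<^sub>v x)" using assms by (intro CS_vec_abs) auto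
  also have "\<dots> \<le> vec_norm x * (frob_norm M * vec_norm x)"
    by (rule mult_left_mono[OF mat_vec_norm_bound[OF assms] vec_norm_nonneg])
  also have "\<dots> = frob_norm M * (x \<bullet> x)" using vec_norm_sq[of x] by (simp add: power2_eq_square)
  finally show ?thesis .
qed



lemma vec_norm_smult: "vec_norm (a \<cdot>\<^sub>v v) = \<bar>a\<bar> * vec_norm (v::real vec)"
proof -
  have "(a \<cdot>\<^sub>v v) \<bullet> (a \<cdot>\<^sub>v v) = a^2 * (v \<bullet> v)" by (simp add: power2_eq_square)
  then show ?thesis unfolding vec_norm_def2 by (simp add: real_sqrt_mult)
qed

lemma vec_norm_zero_iff: assumes "v \<in> carrier_vec n" shows "vec_norm (v::real vec) = 0 \<longleftrightarrow> v = 0\<^sub>v n"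
  using sp_self_zero[OF assms] assms unfolding vec_norm_def2 by auto

lemma transp_sp: assumes "A \<in> carrier_mat r c" "x \<in> carrier_vec c" "y \<in> carrier_vec r"
  shows "y \<bullet> (A *\<^sub>v x) = (transpose_mat A *\<^sub>v y) \<bullet> (x::real vec)"
  using transpose_vec_mult_scalar[OF assms] by simp

lemma AtA_sp: assumes "A \<in> carrier_mat r c" "x \<in> carrier_vec c" "y \<in> carrier_vec c"
  shows "(A *\<^sub>v x) \<bullet> (A *\<^sub>v y) = x \<bullet> ((transpose_mat A * A) *\<^sub>v (y::real vec))"
proof -
  have "(A *\<^sub>v x) \<bullet> (A *\<^sub>v y) = (A *\<^sub>v y) \<bullet> (A *\<^sub>v x)"
    using assms by (simp add: comm_scalar_prod[of _ r])
  also have "\<dots> = (transpose_mat A *\<^sub>v (A *\<^sub>v y)) \<bullet> x"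
    using transp_sp[OF assms(1) assms(2), of "A *\<^sub>v y"] assms by simp
  also have "\<dots> = x \<bullet> ((transpose_mat A * A) *\<^sub>v y)"
    using assms by (simp add: comm_scalar_prod[of _ c])
  finally show ?thesis .
qed

definition snset :: "real mat \<Rightarrow> real set" where
  "snset M = {vec_norm (M *\<^sub>v x) | x. x \<in> carrier_vec (dim_col M) \<and> vec_norm x = 1}"

lemma spec_norm_snset: "spec_norm M = Sup (snset M)" unfolding spec_norm_def snset_def ..

lemma vec_norm_unit: assumes "j < c" shows "vec_norm (unit_vec c j) = 1"
proof -
  have "unit_vec c j \<bullet> (unit_vec c j :: real vec) = 1" using assms by simp
  then show ?thesis by (simp add: vec_norm_def2)
qed

lemma snset_ne: assumes "M \<in> carrier_mat r c" "0 < c" shows "snset M \<noteq> {}"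
  using assms vec_norm_unit[of 0 c] unfolding snset_def by (auto intro!: exI[of _ "unit_vec c 0"])

lemma snset_bdd: assumes "M \<in> carrier_mat r c" shows "\<forall>t\<in>snset M. t \<le> frob_norm M"
  using mat_vec_norm_bound[OF assms] assms unfolding snset_def by fastforce

lemma spec_upper_unit: assumes "M \<in> carrier_mat r c" "x \<in> carrier_vec c" "vec_norm x = 1"
  shows "vec_norm (M *\<^sub>v x) \<le> spec_norm M"
  unfolding spec_norm_snset
proof (rule cSup_upper)
  show "vec_norm (M *\<^sub>v x) \<in> snset M" using assms unfolding snset_def by auto
  show "bdd_above (snset M)" using snset_bdd[OF assms(1)] by (auto simp: bdd_above_def)
qed

lemma spec_nonneg: assumes "M \<in> carrier_mat r c" "0 < c" shows "0 \<le> spec_norm M"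
  using spec_upper_unit[OF assms(1) unit_vec_carrier[of c 0] vec_norm_unit[OF assms(2)]] vec_norm_nonneg
  by (meson order_trans)

lemma spec_upper: assumes "M \<in> carrier_mat r c" "x \<in> carrier_vec c" "0 < c"
  shows "vec_norm (M *\<^sub>v x) \<le> spec_norm M * vec_norm x"
proof (cases "x = 0\<^sub>v c")
  case True
  then have "M *\<^sub>v x = 0\<^sub>v r" using assms by auto
  then have "vec_norm (M *\<^sub>v x) = 0" by (simp add: vec_norm_def2)
  then show ?thesis using spec_nonneg[OF assms(1,3)] vec_norm_nonneg by simp
next
  case False
  define a where "a = vec_norm x"
  have a0: "a > 0" using False vec_norm_zero_iff[OF assms(2)] vec_norm_nonneg unfolding a_def
    by (metis less_eq_real_def)
  have "vec_norm ((1/a) \<cdot>\<^sub>v x) = 1" using a0 by (simp add: vec_norm_smult a_def)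
  then have "vec_norm (M *\<^sub>v ((1/a) \<cdot>\<^sub>v x)) \<le> spec_norm M"
    using assms by (intro spec_upper_unit) auto
  moreover have "M *\<^sub>v ((1/a) \<cdot>\<^sub>v x) = (1/a) \<cdot>\<^sub>v (M *\<^sub>v x)" using assms mult_mat_vec by blast
  ultimately have "(1/a) * vec_norm (M *\<^sub>v x) \<le> spec_norm M" using a0 by (simp add: vec_norm_smult)
  then show ?thesis using a0 by (simp add: a_def field_simps)
qed

lemma spec_least: assumes "M \<in> carrier_mat r c" "0 < c"
  and "\<And>x. x \<in> carrier_vec c \<Longrightarrow> vec_norm x = 1 \<Longrightarrow> vec_norm (M *\<^sub>v x) \<le> b"
  shows "spec_norm M \<le> b"
  unfolding spec_norm_snset
  by (rule cSup_least) (use snset_ne[OF assms(1,2)] assms in \<open>auto simp: snset_def\<close>)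

lemma spec_le_frob: assumes "M \<in> carrier_mat r c" "0 < c" shows "spec_norm M \<le> frob_norm M"
  using spec_least[OF assms] mat_vec_norm_bound[OF assms(1)] by fastforce

lemma spec_pos: assumes "M \<in> carrier_mat r c" "i < r" "j < c" "M $$ (i,j) \<noteq> 0"
  shows "0 < spec_norm M"
proof -
  have "vec_norm (M *\<^sub>v unit_vec c j) \<le> spec_norm M"
    using assms by (intro spec_upper_unit) (auto simp: vec_norm_unit)
  moreover have "M *\<^sub>v unit_vec c j \<noteq> 0\<^sub>v r"
  proof
    assume "M *\<^sub>v unit_vec c j = 0\<^sub>v r"
    then have "(M *\<^sub>v unit_vec c j) $ i = 0" using assms by simp
    moreover have "(M *\<^sub>v unit_vec c j) $ i = M $$ (i,j)" using assms
      by simp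
    ultimately show False using assms by simp
  qed
  then have "vec_norm (M *\<^sub>v unit_vec c j) > 0"
    using vec_norm_zero_iff[of "M *\<^sub>v unit_vec c j" r] vec_norm_nonneg assms
    by (metis less_eq_real_def mult_mat_vec_carrier unit_vec_carrier)
  ultimately show ?thesis by simp
qed

lemma fro2_cols: assumes "M \<in> carrier_mat r c" shows "fro2 M = (\<Sum>j<c. col M j \<bullet> col M j)"
  using assms unfolding fro2_def by (simp add: sp_self_sum sum.swap[of _ "{..<c}"])

lemma fro2_transpose: "fro2 (transpose_mat M) = fro2 M"
  unfolding fro2_def by (simp add: sum.swap[of _ "{..<dim_col M}"])

lemma frob_transpose: "frob_norm (transpose_mat M) = frob_norm M"
  by (simp add: frob_fro2 fro2_transpose)

lemma fro2_left_contr: assumes "B \<in> carrier_mat q r" "M \<in> carrier_mat r c"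
  and "\<And>z. z \<in> carrier_vec r \<Longrightarrow> (B *\<^sub>v z) \<bullet> (B *\<^sub>v z) \<le> z \<bullet> z"
  shows "fro2 (B * M) \<le> fro2 M"
proof -
  have "fro2 (B * M) = (\<Sum>j<c. (B *\<^sub>v col M j) \<bullet> (B *\<^sub>v col M j))"
    using assms by (subst fro2_cols[of _ q c]) auto
  also have "\<dots> \<le> (\<Sum>j<c. col M j \<bullet> col M j)" using assms by (intro sum_mono) auto
  also have "\<dots> = fro2 M" using fro2_cols[OF assms(2)] by simp
  finally show ?thesis .
qed

lemma fro2_right_contr: assumes "B \<in> carrier_mat c q" "M \<in> carrier_mat r c"
  and "\<And>z. z \<in> carrier_vec c \<Longrightarrow> (transpose_mat B *\<^sub>v z) \<bullet> (transpose_mat B *\<^sub>v z) \<le> z \<bullet> z"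
  shows "fro2 (M * B) \<le> fro2 M"
proof -
  have "fro2 (M * B) = fro2 (transpose_mat B * transpose_mat M)"
    using assms by (metis fro2_transpose transpose_mult)
  also have "\<dots> \<le> fro2 (transpose_mat M)" using assms by (intro fro2_left_contr[of _ q c _ r]) auto
  finally show ?thesis by (simp add: fro2_transpose)
qed



lemma bw_fun:
  fixes x :: "nat \<Rightarrow> nat \<Rightarrow> real"
  assumes "\<And>i l. l < m \<Longrightarrow> \<bar>x i l\<bar> \<le> C"
  shows "\<exists>r L. strict_mono r \<and> (\<forall>l<m. (\<lambda>i. x (r i) l) \<longlonglongrightarrow> L l)"
  using assms
proof (induction m)
  case 0
  then show ?case by (auto intro!: exI[of _ id] simp: strict_mono_def)
next
  case (Suc m)
  then obtain r L where r: "strict_mono r" and L: "\<forall>l<m. (\<lambda>i. x (r i) l) \<longlonglongrightarrow> L l" by auto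
  obtain r2 where r2: "strict_mono r2" and mono: "monoseq (\<lambda>n. x (r (r2 n)) m)"
    using seq_monosub[of "\<lambda>i. x (r i) m"] by auto
  have "Bseq (\<lambda>n. x (r (r2 n)) m)" using Suc.prems by (intro BseqI'[of _ C]) auto
  then have "convergent (\<lambda>n. x (r (r2 n)) m)" using mono Bseq_monoseq_convergent by blast
  then obtain a where a: "(\<lambda>n. x (r (r2 n)) m) \<longlonglongrightarrow> a" by (auto simp: convergent_def)
  show ?case
  proof (intro exI conjI allI impI)
    show "strict_mono (r \<circ> r2)" using r r2 by (rule strict_mono_o)
    fix l assume "l < Suc m"
    show "(\<lambda>i. x ((r \<circ> r2) i) l) \<longlonglongrightarrow> (L(m := a)) l"
    proof (cases "l = m")
      case True then show ?thesis using a by simp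
    next
      case False
      then have "l < m" using \<open>l < Suc m\<close> by simp
      then have "((\<lambda>i. x (r i) l) \<circ> r2) \<longlonglongrightarrow> L l" using L r2 LIMSEQ_subseq_LIMSEQ by blast
      then show ?thesis using False by (simp add: comp_def)
    qed
  qed
qed

lemma sp_tendsto:
  assumes "\<And>i. a i \<in> carrier_vec m" "\<And>i. b i \<in> carrier_vec m" "a' \<in> carrier_vec m" "b' \<in> carrier_vec m"
    "\<And>l. l < m \<Longrightarrow> (\<lambda>i. a i $ l) \<longlonglongrightarrow> a' $ l"
    "\<And>l. l < m \<Longrightarrow> (\<lambda>i. b i $ l) \<longlonglongrightarrow> b' $ l"
  shows "(\<lambda>i. a i \<bullet> b i) \<longlonglongrightarrow> a' \<bullet> (b'::real vec)"
proof -
  have eq: "a i \<bullet> b i = (\<Sum>l\<in>{0..<m}. a i $ l * b i $ l)" for i using assms(2)[of i] by (simp add: scalar_prod_def)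
  have eq2: "a' \<bullet> b' = (\<Sum>l\<in>{0..<m}. a' $ l * b' $ l)" using assms(4) by (simp add: scalar_prod_def)
  show ?thesis unfolding eq eq2
    by (rule tendsto_sum, rule tendsto_mult) (use assms(5,6) in auto)
qed

lemma matvec_tendsto:
  assumes "B \<in> carrier_mat q m" "\<And>i. a i \<in> carrier_vec m" "a' \<in> carrier_vec m"
    "\<And>l. l < m \<Longrightarrow> (\<lambda>i. a i $ l) \<longlonglongrightarrow> a' $ l" "l < q"
  shows "(\<lambda>i. (B *\<^sub>v a i) $ l) \<longlonglongrightarrow> (B *\<^sub>v (a'::real vec)) $ l"
proof -
  have "(\<lambda>i. row B l \<bullet> a i) \<longlonglongrightarrow> row B l \<bullet> a'"
    by (rule sp_tendsto[of "\<lambda>_. row B l" m]) (use assms in auto)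
  then show ?thesis using assms by simp
qed

lemma coord_le1: assumes "y \<in> carrier_vec m" "y \<bullet> y = (1::real)" "l < m" shows "\<bar>y $ l\<bar> \<le> 1"
proof -
  have "(y $ l)^2 \<le> (\<Sum>i<m. (y$i)^2)" using assms by (intro member_le_sum) auto
  then have "(y $ l)^2 \<le> 1" using assms by (simp add: sp_self_sum)
  then show ?thesis by (simp add: abs_square_le_1)
qed



lemma max_exists:
  fixes B E :: "real mat"
  assumes B: "B \<in> carrier_mat q m" and E: "E \<in> carrier_mat m j"
    and y1: "y1 \<in> carrier_vec m" "y1 \<bullet> y1 = 1" "transpose_mat E *\<^sub>v y1 = 0\<^sub>v j"
  shows "\<exists>y0. y0 \<in> carrier_vec m \<and> y0 \<bullet> y0 = 1 \<and> transpose_mat E *\<^sub>v y0 = 0\<^sub>v j \<and>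
    (\<forall>y. y \<in> carrier_vec m \<and> y \<bullet> y = 1 \<and> transpose_mat E *\<^sub>v y = 0\<^sub>v j \<longrightarrow>
       (B *\<^sub>v y) \<bullet> (B *\<^sub>v y) \<le> (B *\<^sub>v y0) \<bullet> (B *\<^sub>v y0))"
proof -
  define K where "K = {y \<in> carrier_vec m. y \<bullet> y = 1 \<and> transpose_mat E *\<^sub>v y = 0\<^sub>v j}"
  define f where "f y = (B *\<^sub>v y) \<bullet> (B *\<^sub>v y)" for y
  define mu where "mu = Sup (f ` K)"
  have Kne: "f ` K \<noteq> {}" using y1 unfolding K_def by auto
  have fbd: "f y \<le> fro2 B" if "y \<in> K" for y
    using mat_vec_sq_bound[OF B, of y] that unfolding K_def f_def by auto
  have bdd: "bdd_above (f ` K)" using fbd by (auto simp: bdd_above_def)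
  have upper: "f y \<le> mu" if "y \<in> K" for y unfolding mu_def using bdd that by (intro cSup_upper) auto
  have "\<forall>i. \<exists>y\<in>K. mu - 1 / real (Suc i) < f y"
  proof
    fix i
    have "mu - 1 / real (Suc i) < mu" by simp
    then obtain z where "z \<in> f ` K" "mu - 1 / real (Suc i) < z"
      using less_cSupD[OF Kne] unfolding mu_def by blast
    then show "\<exists>y\<in>K. mu - 1 / real (Suc i) < f y" by auto
  qed
  then have "\<exists>ys. \<forall>i. ys i \<in> K \<and> mu - 1 / real (Suc i) < f (ys i)"
    by (intro choice) blast
  then obtain ys where ys': "\<forall>i. ys i \<in> K \<and> mu - 1 / real (Suc i) < f (ys i)" by blast
  then have ys: "\<And>i. ys i \<in> K" "\<And>i. mu - 1 / real (Suc i) < f (ys i)" by auto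
  have ysc: "\<And>i. ys i \<in> carrier_vec m" using ys(1) unfolding K_def by auto
  have "\<And>i l. l < m \<Longrightarrow> \<bar>ys i $ l\<bar> \<le> 1" using ys(1) coord_le1 unfolding K_def by blast
  then obtain r L where r: "strict_mono r" and L: "\<forall>l<m. (\<lambda>i. ys (r i) $ l) \<longlonglongrightarrow> L l"
    using bw_fun[of m "\<lambda>i l. ys i $ l" 1] by blast
  define y0 where "y0 = vec m L"
  have y0c: "y0 \<in> carrier_vec m" unfolding y0_def by simp
  have conv: "\<And>l. l < m \<Longrightarrow> (\<lambda>i. ys (r i) $ l) \<longlonglongrightarrow> y0 $ l" using L unfolding y0_def by simp
  have "(\<lambda>i. ys (r i) \<bullet> ys (r i)) \<longlonglongrightarrow> y0 \<bullet> y0"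
    by (rule sp_tendsto[of _ m]) (use ysc y0c conv in auto)
  moreover have "\<And>i. ys (r i) \<bullet> ys (r i) = 1" using ys(1) unfolding K_def by auto
  ultimately have "(\<lambda>i. 1::real) \<longlonglongrightarrow> y0 \<bullet> y0" by simp
  then have n1: "y0 \<bullet> y0 = 1" by (simp add: LIMSEQ_const_iff)
  have e0: "transpose_mat E *\<^sub>v y0 = 0\<^sub>v j"
  proof (rule eq_vecI)
    fix l assume "l < dim_vec (0\<^sub>v j :: real vec)"
    then have l: "l < j" by simp
    have "(\<lambda>i. (transpose_mat E *\<^sub>v ys (r i)) $ l) \<longlonglongrightarrow> (transpose_mat E *\<^sub>v y0) $ l"
      by (rule matvec_tendsto[of _ j m]) (use E ysc y0c conv l in auto)
    moreover have "\<And>i. (transpose_mat E *\<^sub>v ys (r i)) $ l = 0" using ys(1) l unfolding K_def by auto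
    ultimately have "(\<lambda>i. 0::real) \<longlonglongrightarrow> (transpose_mat E *\<^sub>v y0) $ l" by simp
    then show "(transpose_mat E *\<^sub>v y0) $ l = 0\<^sub>v j $ l" using l by (simp add: LIMSEQ_const_iff)
  qed (use E in auto)
  have y0K: "y0 \<in> K" using y0c n1 e0 unfolding K_def by auto
  have fconv: "(\<lambda>i. f (ys (r i))) \<longlonglongrightarrow> f y0"
    unfolding f_def
  proof (rule sp_tendsto[of _ q])
    fix l assume "l < q"
    then show "(\<lambda>i. (B *\<^sub>v ys (r i)) $ l) \<longlonglongrightarrow> (B *\<^sub>v y0) $ l"
      by (intro matvec_tendsto[OF B]) (use ysc y0c conv in auto)
    then show "(\<lambda>i. (B *\<^sub>v ys (r i)) $ l) \<longlonglongrightarrow> (B *\<^sub>v y0) $ l" .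
  qed (use B ysc y0c in auto)
  have "(\<lambda>i. inverse (real (Suc i))) \<longlonglongrightarrow> 0" by (rule LIMSEQ_inverse_real_of_nat)
  then have "((\<lambda>i. inverse (real (Suc i))) \<circ> r) \<longlonglongrightarrow> 0" using r LIMSEQ_subseq_LIMSEQ by blast
  then have "(\<lambda>i. mu - 1 / real (Suc (r i))) \<longlonglongrightarrow> mu - 0"
    by (intro tendsto_diff) (auto simp: comp_def divide_inverse)
  then have "mu \<le> f y0" using fconv ys(2)
    by (intro LIMSEQ_le[of "\<lambda>i. mu - 1 / real (Suc (r i))" _ "\<lambda>i. f (ys (r i))"]) (auto intro: less_imp_le)
  then have "\<forall>y\<in>K. f y \<le> f y0" using upper by fastforce
  then show ?thesis using y0c n1 e0 unfolding K_def f_def by (intro exI[of _ y0]) blast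
qed



lemma wide_kernel:
  fixes G :: "real mat"
  assumes G: "G \<in> carrier_mat q c" and qc: "q < c"
  shows "\<exists>v. v \<in> carrier_vec c \<and> v \<noteq> 0\<^sub>v c \<and> G *\<^sub>v v = 0\<^sub>v q"
proof -
  define G' where "G' = mat\<^sub>r c c (\<lambda>i. if i = c - 1 then 0\<^sub>v c else (if i < q then row G i else 0\<^sub>v c))"
  have "det G' = 0" unfolding G'_def
    by (rule det_row_0) (use qc G in auto)
  moreover have G'c: "G' \<in> carrier_mat c c" unfolding G'_def by simp
  ultimately obtain v where v: "v \<in> carrier_vec c" "v \<noteq> 0\<^sub>v c" "G' *\<^sub>v v = 0\<^sub>v c"
    using det_0_iff_vec_prod_zero by blast
  have "G *\<^sub>v v = 0\<^sub>v q"
  proof (rule eq_vecI)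
    fix i assume "i < dim_vec (0\<^sub>v q :: real vec)"
    then have i: "i < q" by simp
    have "(G' *\<^sub>v v) $ i = 0" using v i qc by simp
    moreover have "(G' *\<^sub>v v) $ i = row G i \<bullet> v" using i qc G unfolding G'_def by simp
    ultimately show "(G *\<^sub>v v) $ i = 0\<^sub>v q $ i" using i G by simp
  qed (use G in simp)
  then show ?thesis using v by blast
qed

lemma f_eq: assumes "A \<in> carrier_mat m n" "x \<in> carrier_vec m" "y \<in> carrier_vec m"
  shows "(transpose_mat A *\<^sub>v x) \<bullet> (transpose_mat A *\<^sub>v y) = x \<bullet> ((A * transpose_mat A) *\<^sub>v (y::real vec))"
  using AtA_sp[of "transpose_mat A" n m x y] assms by simp

lemma M_sym: assumes "A \<in> carrier_mat m n" "x \<in> carrier_vec m" "y \<in> carrier_vec m"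
  shows "x \<bullet> ((A * transpose_mat A) *\<^sub>v y) = y \<bullet> ((A * transpose_mat A) *\<^sub>v (x::real vec))"
proof -
  have "x \<bullet> ((A * transpose_mat A) *\<^sub>v y) = (transpose_mat A *\<^sub>v x) \<bullet> (transpose_mat A *\<^sub>v y)"
    using f_eq[OF assms] by simp
  also have "\<dots> = (transpose_mat A *\<^sub>v y) \<bullet> (transpose_mat A *\<^sub>v x)"
    using assms by (intro comm_scalar_prod[of _ n]) auto
  also have "\<dots> = y \<bullet> ((A * transpose_mat A) *\<^sub>v x)" using f_eq[OF assms(1,3,2)] by simp
  finally show ?thesis .
qed

lemma quad_zero_lin:
  fixes a b :: real
  assumes "\<And>t. 2 * t * b \<le> t^2 * a" "0 \<le> a"
  shows "b = 0"
proof -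
  define t where "t = b / (a + 1)"
  have a1: "a + 1 > 0" using assms(2) by simp
  have tb: "t * (a + 1) = b" using a1 by (simp add: t_def)
  have "2 * t * b * (a+1)^2 \<le> t^2 * a * (a+1)^2" using assms(1)[of t] by (intro mult_right_mono) auto
  moreover have "2 * t * b * (a+1)^2 = 2 * b * b * (a + 1)"
    unfolding tb[symmetric] by (simp add: power2_eq_square algebra_simps)
  moreover have "t^2 * a * (a+1)^2 = b * b * a"
    unfolding tb[symmetric] by (simp add: power2_eq_square algebra_simps)
  ultimately have "2 * b * b * (a + 1) \<le> b * b * a" by simp
  then have "b * b * (a + 2) \<le> 0" by (simp add: algebra_simps)
  moreover have "a + 2 > 0" using assms(2) by simp
  ultimately have "b * b \<le> 0" by (simp add: mult_le_0_iff)
  then have "b * b = 0" using zero_le_square[of b] by linarith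
  then show ?thesis by simp
qed

lemma lagrange:
  fixes A E :: "real mat"
  assumes A: "A \<in> carrier_mat m n" and E: "E \<in> carrier_mat m j"
    and eig: "\<And>i. i < j \<Longrightarrow> (A * transpose_mat A) *\<^sub>v col E i = lam i \<cdot>\<^sub>v col E i"
    and y0: "y0 \<in> carrier_vec m" "y0 \<bullet> y0 = 1" "transpose_mat E *\<^sub>v y0 = 0\<^sub>v j"
    and mx: "\<And>y. y \<in> carrier_vec m \<Longrightarrow> transpose_mat E *\<^sub>v y = 0\<^sub>v j \<Longrightarrow>
              (transpose_mat A *\<^sub>v y) \<bullet> (transpose_mat A *\<^sub>v y) \<le> mu * (y \<bullet> y)"
    and mu: "mu = (transpose_mat A *\<^sub>v y0) \<bullet> (transpose_mat A *\<^sub>v y0)"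
  shows "(A * transpose_mat A) *\<^sub>v y0 = mu \<cdot>\<^sub>v y0"
proof -
  define At where "At = transpose_mat A"
  define M where "M = A * transpose_mat A"
  have At: "At \<in> carrier_mat n m" using A unfolding At_def by simp
  have Mc: "M \<in> carrier_mat m m" using A unfolding M_def by simp
  have key: "u \<bullet> (M *\<^sub>v y0) = mu * (u \<bullet> y0)" if u: "u \<in> carrier_vec m" "transpose_mat E *\<^sub>v u = 0\<^sub>v j" for u
  proof -
    define c where "c = (At *\<^sub>v y0) \<bullet> (At *\<^sub>v u)"
    define d where "d = y0 \<bullet> u"
    define fu where "fu = (At *\<^sub>v u) \<bullet> (At *\<^sub>v u)"
    have "2 * t * (c - mu * d) \<le> t^2 * (mu * (u \<bullet> u) - fu)" for t
    proof -
      define z where "z = y0 + t \<cdot>\<^sub>v u"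
      have zc: "z \<in> carrier_vec m" using y0 u unfolding z_def by simp
      have "transpose_mat E *\<^sub>v z = transpose_mat E *\<^sub>v y0 + transpose_mat E *\<^sub>v (t \<cdot>\<^sub>v u)"
        unfolding z_def using E y0 u by (simp add: mult_add_distrib_mat_vec[of _ j m])
      also have "transpose_mat E *\<^sub>v (t \<cdot>\<^sub>v u) = t \<cdot>\<^sub>v (transpose_mat E *\<^sub>v u)"
        by (rule mult_mat_vec) (use E u in auto)
      also have "transpose_mat E *\<^sub>v y0 + t \<cdot>\<^sub>v (transpose_mat E *\<^sub>v u) = 0\<^sub>v j"
        unfolding y0(3) u(2) by (rule eq_vecI) auto
      finally have "(At *\<^sub>v z) \<bullet> (At *\<^sub>v z) \<le> mu * (z \<bullet> z)" using mx zc unfolding At_def by blast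
      moreover have "At *\<^sub>v z = At *\<^sub>v y0 + t \<cdot>\<^sub>v (At *\<^sub>v u)"
        unfolding z_def using At y0 u by (simp add: mult_add_distrib_mat_vec[of _ n m] mult_mat_vec[of _ n m])
      moreover have "(At *\<^sub>v y0 + t \<cdot>\<^sub>v (At *\<^sub>v u)) \<bullet> (At *\<^sub>v y0 + t \<cdot>\<^sub>v (At *\<^sub>v u))
          = mu + 2 * t * c + t^2 * fu"
        using sp_add_self[of "At *\<^sub>v y0" n "t \<cdot>\<^sub>v (At *\<^sub>v u)"] At y0 u
        unfolding mu c_def fu_def At_def by (simp add: power2_eq_square)
      moreover have "z \<bullet> z = 1 + 2 * t * d + t^2 * (u \<bullet> u)"
        using sp_add_self[of y0 m "t \<cdot>\<^sub>v u"] y0 u unfolding z_def d_def by (simp add: power2_eq_square)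
      ultimately have "mu + 2 * t * c + t^2 * fu \<le> mu * (1 + 2 * t * d + t^2 * (u \<bullet> u))" by simp
      then show ?thesis by (simp add: algebra_simps)
    qed
    moreover have "0 \<le> mu * (u \<bullet> u) - fu" using mx[OF u] unfolding fu_def At_def by simp
    ultimately have "c - mu * d = 0" by (rule quad_zero_lin)
    moreover have "c = u \<bullet> (M *\<^sub>v y0)"
    proof -
      have "c = (At *\<^sub>v u) \<bullet> (At *\<^sub>v y0)" unfolding c_def using At y0 u by (intro comm_scalar_prod[of _ n]) auto
      then show ?thesis using f_eq[OF A u(1) y0(1)] unfolding At_def M_def by simp
    qed
    moreover have "d = u \<bullet> y0" unfolding d_def using y0 u by (intro comm_scalar_prod[of _ m]) auto
    ultimately show ?thesis by simp
  qed
  define w where "w = M *\<^sub>v y0 - mu \<cdot>\<^sub>v y0"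
  have wc: "w \<in> carrier_vec m" unfolding w_def using Mc y0 by simp
  have wE: "transpose_mat E *\<^sub>v w = 0\<^sub>v j"
  proof (rule eq_vecI)
    fix i assume "i < dim_vec (0\<^sub>v j :: real vec)"
    then have i: "i < j" by simp
    have ce: "col E i \<in> carrier_vec m" using E i by simp
    have "(transpose_mat E *\<^sub>v w) $ i = col E i \<bullet> w" using E i by simp
    also have "\<dots> = col E i \<bullet> (M *\<^sub>v y0) - mu * (col E i \<bullet> y0)"
      unfolding w_def using ce Mc y0 by (simp add: scalar_prod_minus_distrib[of _ m])
    also have "col E i \<bullet> (M *\<^sub>v y0) = y0 \<bullet> (M *\<^sub>v col E i)"
      using M_sym[OF A ce y0(1)] unfolding M_def by simp
    also have "\<dots> = lam i * (y0 \<bullet> col E i)" using eig[OF i] y0 ce unfolding M_def by simp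
    also have "col E i \<bullet> y0 = 0"
    proof -
      have "(transpose_mat E *\<^sub>v y0) $ i = col E i \<bullet> y0" using E i by simp
      then show ?thesis using y0(3) i by simp
    qed
    moreover have "y0 \<bullet> col E i = col E i \<bullet> y0" using y0 ce by (intro comm_scalar_prod[of _ m]) auto
    ultimately show "(transpose_mat E *\<^sub>v w) $ i = 0\<^sub>v j $ i" using i by simp
  qed (use E in simp)
  have "w \<bullet> (M *\<^sub>v y0) = mu * (w \<bullet> y0)" by (rule key[OF wc wE])
  then have "w \<bullet> w = 0" unfolding w_def using Mc y0
    by (simp add: scalar_prod_minus_distrib[of _ m] minus_scalar_prod_distrib[of _ m])
  then have "w = 0\<^sub>v m" using sp_self_zero[OF wc] by simp
  show ?thesis
  proof (rule eq_vecI)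
    fix i assume "i < dim_vec (mu \<cdot>\<^sub>v y0)"
    then have i: "i < m" using y0 by simp
    have "w $ i = 0" using \<open>w = 0\<^sub>v m\<close> i by simp
    then show "((A * transpose_mat A) *\<^sub>v y0) $ i = (mu \<cdot>\<^sub>v y0) $ i"
      using i Mc y0 unfolding w_def M_def by simp
  qed (use A y0 in simp)
qed



lemma EtE_vec: assumes "E \<in> carrier_mat m j" "transpose_mat E * E = 1\<^sub>m j" "v \<in> carrier_vec j"
  shows "transpose_mat E *\<^sub>v (E *\<^sub>v v) = (v::real vec)"
proof -
  have "(transpose_mat E * E) *\<^sub>v v = transpose_mat E *\<^sub>v (E *\<^sub>v v)"
    by (rule assoc_mult_mat_vec) (use assms in auto)
  then show ?thesis using assms by (metis one_mult_mat_vec)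
qed

lemma col_in_span:
  fixes A E :: "real mat"
  assumes A: "A \<in> carrier_mat m n" and E: "E \<in> carrier_mat m j" and EE: "transpose_mat E * E = 1\<^sub>m j"
    and kill: "\<And>y. y \<in> carrier_vec m \<Longrightarrow> transpose_mat E *\<^sub>v y = 0\<^sub>v j \<Longrightarrow> transpose_mat A *\<^sub>v y = 0\<^sub>v n"
    and l: "l < n"
  shows "col A l = E *\<^sub>v (transpose_mat E *\<^sub>v col A l)"
proof -
  define x where "x = col A l"
  define w where "w = transpose_mat E *\<^sub>v x"
  define z where "z = x - E *\<^sub>v w"
  have xc: "x \<in> carrier_vec m" unfolding x_def using A l by simp
  have wc: "w \<in> carrier_vec j" unfolding w_def using E xc by simp
  have Ewc: "E *\<^sub>v w \<in> carrier_vec m" using E wc by simp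
  have zc: "z \<in> carrier_vec m" unfolding z_def using xc Ewc by simp
  have "transpose_mat E *\<^sub>v z = transpose_mat E *\<^sub>v x - transpose_mat E *\<^sub>v (E *\<^sub>v w)"
    unfolding z_def using E xc Ewc by (simp add: mult_minus_distrib_mat_vec[of _ j m])
  also have "\<dots> = 0\<^sub>v j" using EtE_vec[OF E EE wc] E xc unfolding w_def by (auto intro!: eq_vecI)
  finally have zE: "transpose_mat E *\<^sub>v z = 0\<^sub>v j" .
  then have zA: "transpose_mat A *\<^sub>v z = 0\<^sub>v n" using kill zc by blast
  have "x \<bullet> z = (transpose_mat A *\<^sub>v z) $ l" unfolding x_def using A l zc by simp
  then have zx: "z \<bullet> x = 0" using zA l comm_scalar_prod[OF zc xc] by simp
  have "z \<bullet> (E *\<^sub>v w) = (transpose_mat E *\<^sub>v z) \<bullet> w" using transp_sp[OF E wc zc] .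
  then have zEw: "z \<bullet> (E *\<^sub>v w) = 0" using zE wc by simp
  have "z \<bullet> (x - E *\<^sub>v w) = z \<bullet> x - z \<bullet> (E *\<^sub>v w)"
    by (rule scalar_prod_minus_distrib) (use zc xc Ewc in auto)
  then have "z \<bullet> z = z \<bullet> x - z \<bullet> (E *\<^sub>v w)" unfolding z_def[symmetric] .
  then have "z \<bullet> z = 0" using zx zEw by simp
  then have "z = 0\<^sub>v m" using sp_self_zero[OF zc] by simp
  then have "x = E *\<^sub>v w"
  proof -
    assume z0: "z = 0\<^sub>v m"
    show "x = E *\<^sub>v w"
    proof (rule eq_vecI)
      fix i assume "i < dim_vec (E *\<^sub>v w)"
      then have i: "i < m" using E by simp
      have "z $ i = 0" using z0 i by simp
      then show "x $ i = (E *\<^sub>v w) $ i" using i xc Ewc E unfolding z_def by simp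
    qed (use xc E in simp)
  qed
  then show ?thesis unfolding x_def w_def .
qed

lemma rank_le_span:
  fixes A E :: "real mat"
  assumes A: "A \<in> carrier_mat m n" and E: "E \<in> carrier_mat m j" and EE: "transpose_mat E * E = 1\<^sub>m j"
    and kill: "\<And>y. y \<in> carrier_vec m \<Longrightarrow> transpose_mat E *\<^sub>v y = 0\<^sub>v j \<Longrightarrow> transpose_mat A *\<^sub>v y = 0\<^sub>v n"
  shows "vec_space.rank m A \<le> j"
proof (rule ccontr)
  assume "\<not> vec_space.rank m A \<le> j"
  then have rk: "Suc j \<le> vec_space.rank m A" by simp
  interpret V: vec_space "TYPE(real)" m .
  define P where "P T = (T \<subseteq> set (cols A) \<and> V.lin_indpt T)" for T
  have P0: "P {}" unfolding P_def V.lin_dep_def by auto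
  obtain S where S: "finite S" "maximal S P" "{} \<subseteq> S"
    using maximal_exists_superset[of "set (cols A)" P "{}"] P0 unfolding P_def by blast
  have rS: "V.rank A = card S" using V.rank_card_indpt[OF A] S(2) unfolding P_def by blast
  have SP: "P S" using S(2) unfolding maximal_def by blast
  obtain T where T: "T \<subseteq> S" "card T = Suc j" "finite T"
    using obtain_subset_with_card_n[of "Suc j" S] rk rS by auto
  obtain xs where xs: "set xs = T" "distinct xs" using finite_distinct_list[OF T(3)] by blast
  have lxs: "length xs = Suc j" using xs T(2) distinct_card by fastforce
  have xsA: "x \<in> set (cols A)" if "x \<in> set xs" for x using that xs T SP unfolding P_def by blast
  have xsc: "x \<in> carrier_vec m" if "x \<in> set xs" for x
    using xsA[OF that] A by (auto simp: cols_def)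
  have xsE: "x = E *\<^sub>v (transpose_mat E *\<^sub>v x)" if xin: "x \<in> set xs" for x
  proof -
    obtain l where l: "l < n" "x = col A l" using xsA[OF xin] A by (auto simp: cols_def)
    then show ?thesis using col_in_span[OF A E EE kill l(1)] by simp
  qed
  define C where "C = mat_of_cols m xs"
  have Cc: "C \<in> carrier_mat m (Suc j)" unfolding C_def using lxs by (metis mat_of_cols_carrier(1))
  have colC: "col C b = xs ! b" if "b < Suc j" for b
    unfolding C_def using that lxs xsc by (intro col_mat_of_cols) auto
  define G where "G = transpose_mat E * C"
  have Gc: "G \<in> carrier_mat j (Suc j)" unfolding G_def using E Cc by simp
  have CEG: "C = E * G"
  proof (rule mat_col_eqI)
    fix b assume "b < dim_col (E * G)"
    then have b: "b < Suc j" using Gc by simp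
    have "col (E * G) b = E *\<^sub>v col G b" using E Gc b by simp
    also have "col G b = transpose_mat E *\<^sub>v col C b" unfolding G_def using E Cc b by simp
    finally show "col C b = col (E * G) b" using colC[OF b] xsE b lxs by (metis nth_mem)
  qed (use Cc E Gc in auto)
  obtain v where v: "v \<in> carrier_vec (Suc j)" "v \<noteq> 0\<^sub>v (Suc j)" "G *\<^sub>v v = 0\<^sub>v j"
    using wide_kernel[OF Gc] by auto
  have "C *\<^sub>v v = E *\<^sub>v (G *\<^sub>v v)" unfolding CEG using E Gc v by simp
  also have "\<dots> = 0\<^sub>v m" using v E by (auto intro!: eq_vecI)
  finally have Cv: "C *\<^sub>v v = 0\<^sub>v m" .
  have dC: "distinct (cols C)" unfolding C_def using xs xsc by (subst cols_mat_of_cols) auto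
  have "V.lin_dep (set (cols C))" by (rule V.lin_depI[OF Cc v(1) v(2) Cv dC])
  moreover have "set (cols C) = T" unfolding C_def using xs xsc by (subst cols_mat_of_cols) auto
  moreover have "V.lin_indpt T" using SP T(1) V.subset_li_is_li unfolding P_def by blast
  ultimately show False by simp
qed



lemma eig_build:
  fixes A :: "real mat"
  assumes A: "A \<in> carrier_mat m n"
  shows "j \<le> vec_space.rank m A \<Longrightarrow> \<exists>E lam. E \<in> carrier_mat m j \<and> transpose_mat E * E = 1\<^sub>m j \<and>
     (\<forall>i<j. (A * transpose_mat A) *\<^sub>v col E i = lam i \<cdot>\<^sub>v col E i \<and> lam i > 0)"
proof (induction j)
  case 0
  show ?case by (intro exI[of _ "0\<^sub>m m 0"] exI[of _ "\<lambda>_. 1"]) (auto intro!: eq_matI)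
next
  case (Suc j)
  then obtain E lam where E: "E \<in> carrier_mat m j" and EE: "transpose_mat E * E = 1\<^sub>m j"
    and eig: "\<forall>i<j. (A * transpose_mat A) *\<^sub>v col E i = lam i \<cdot>\<^sub>v col E i \<and> lam i > 0" by auto
  define At where "At = transpose_mat A"
  have At: "At \<in> carrier_mat n m" using A unfolding At_def by simp
  define f where "f y = (At *\<^sub>v y) \<bullet> (At *\<^sub>v y)" for y
  have "\<exists>y. y \<in> carrier_vec m \<and> transpose_mat E *\<^sub>v y = 0\<^sub>v j \<and> At *\<^sub>v y \<noteq> 0\<^sub>v n"
  proof (rule ccontr)
    assume "\<not> ?thesis"
    then have "vec_space.rank m A \<le> j" using rank_le_span[OF A E EE] unfolding At_def by blast
    then show False using Suc.prems by simp
  qed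
  then obtain y where y: "y \<in> carrier_vec m" "transpose_mat E *\<^sub>v y = 0\<^sub>v j" "At *\<^sub>v y \<noteq> 0\<^sub>v n" by blast
  have y0': "y \<noteq> 0\<^sub>v m" using y At by auto
  define a where "a = vec_norm y"
  have a0: "a > 0" using y0' vec_norm_zero_iff[OF y(1)] vec_norm_nonneg unfolding a_def
    by (metis less_eq_real_def)
  have scaleE: "transpose_mat E *\<^sub>v (c \<cdot>\<^sub>v z) = c \<cdot>\<^sub>v (transpose_mat E *\<^sub>v z)" if "z \<in> carrier_vec m" for c z
    by (rule mult_mat_vec) (use E that in auto)
  have scaleA: "At *\<^sub>v (c \<cdot>\<^sub>v z) = c \<cdot>\<^sub>v (At *\<^sub>v z)" if "z \<in> carrier_vec m" for c z
    by (rule mult_mat_vec) (use At that in auto)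
  have fscale: "f (c \<cdot>\<^sub>v z) = c^2 * f z" if "z \<in> carrier_vec m" for c z
    unfolding f_def scaleA[OF that] using At that by (simp add: power2_eq_square)
  have zero_sm: "c \<cdot>\<^sub>v (0\<^sub>v j :: real vec) = 0\<^sub>v j" for c by (rule eq_vecI) auto
  define y1 where "y1 = (1/a) \<cdot>\<^sub>v y"
  have y1c: "y1 \<in> carrier_vec m" unfolding y1_def using y by simp
  have y1n: "y1 \<bullet> y1 = 1"
  proof -
    have "vec_norm y1 = 1" unfolding y1_def using a0 by (simp add: vec_norm_smult a_def)
    then show ?thesis using vec_norm_sq[of y1] by simp
  qed
  have y1E: "transpose_mat E *\<^sub>v y1 = 0\<^sub>v j" unfolding y1_def scaleE[OF y(1)] y(2) zero_sm ..
  have fy: "f y > 0"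
  proof -
    have "f y \<noteq> 0" using sp_self_zero[of "At *\<^sub>v y" n] y At unfolding f_def by auto
    then show ?thesis using sp_self_nonneg unfolding f_def by (simp add: less_le)
  qed
  have fy1: "f y1 > 0" unfolding y1_def fscale[OF y(1)] using fy a0 by simp
  obtain y0 where y0: "y0 \<in> carrier_vec m" "y0 \<bullet> y0 = 1" "transpose_mat E *\<^sub>v y0 = 0\<^sub>v j"
    and mx1: "\<And>z. z \<in> carrier_vec m \<Longrightarrow> z \<bullet> z = 1 \<Longrightarrow> transpose_mat E *\<^sub>v z = 0\<^sub>v j \<Longrightarrow> f z \<le> f y0"
    using max_exists[OF At E y1c y1n y1E] unfolding f_def by blast
  define mu where "mu = f y0"
  have mupos: "mu > 0" using mx1[OF y1c y1n y1E] fy1 unfolding mu_def by simp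
  have mx: "f z \<le> mu * (z \<bullet> z)" if z: "z \<in> carrier_vec m" "transpose_mat E *\<^sub>v z = 0\<^sub>v j" for z
  proof (cases "z = 0\<^sub>v m")
    case True
    have "At *\<^sub>v 0\<^sub>v m = 0\<^sub>v n" by (rule eq_vecI) (use At in auto)
    then have "f z = 0" unfolding f_def using True by simp
    then show ?thesis using True by simp
  next
    case False
    define b where "b = vec_norm z"
    have b0: "b > 0" using False vec_norm_zero_iff[OF z(1)] vec_norm_nonneg unfolding b_def
      by (metis less_eq_real_def)
    have "vec_norm ((1/b) \<cdot>\<^sub>v z) = 1" using b0 by (simp add: vec_norm_smult b_def)
    then have n1: "((1/b) \<cdot>\<^sub>v z) \<bullet> ((1/b) \<cdot>\<^sub>v z) = 1" by (metis vec_norm_sq one_power2)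
    have "transpose_mat E *\<^sub>v ((1/b) \<cdot>\<^sub>v z) = 0\<^sub>v j" unfolding scaleE[OF z(1)] z(2) zero_sm ..
    then have "f ((1/b) \<cdot>\<^sub>v z) \<le> mu" using mx1[of "(1/b) \<cdot>\<^sub>v z"] n1 z unfolding mu_def by simp
    then have "(1/b)^2 * f z \<le> mu" using fscale[OF z(1)] by simp
    then have "f z \<le> mu * b^2" using b0 by (simp add: field_simps)
    moreover have "b^2 = z \<bullet> z" unfolding b_def by (rule vec_norm_sq)
    ultimately show ?thesis by simp
  qed
  have eigy0: "(A * transpose_mat A) *\<^sub>v y0 = mu \<cdot>\<^sub>v y0"
    by (rule lagrange[OF A E _ y0, of lam]) (use eig mx mu_def f_def At_def in auto)
  define E' where "E' = mat m (Suc j) (\<lambda>(a,b). if b < j then E $$ (a,b) else y0 $ a)"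
  have E'c: "E' \<in> carrier_mat m (Suc j)" unfolding E'_def by simp
  have colE': "col E' i = (if i < j then col E i else y0)" if "i < Suc j" for i
    unfolding E'_def using that E y0 by (auto intro!: eq_vecI)
  have orth: "col E i \<bullet> y0 = 0" if "i < j" for i
  proof -
    have "(transpose_mat E *\<^sub>v y0) $ i = col E i \<bullet> y0" using E that by simp
    then show ?thesis using y0(3) that by simp
  qed
  have EEij: "col E a \<bullet> col E b = (if a = b then 1 else 0)" if "a < j" "b < j" for a b
  proof -
    have "(transpose_mat E * E) $$ (a,b) = col E a \<bullet> col E b" using E that by simp
    then show ?thesis using EE that by simp
  qed
  have E'E': "transpose_mat E' * E' = 1\<^sub>m (Suc j)"
  proof (rule eq_matI)
    fix a b assume ab: "a < dim_row (1\<^sub>m (Suc j) :: real mat)" "b < dim_col (1\<^sub>m (Suc j) :: real mat)"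
    then have a: "a < Suc j" and b: "b < Suc j" by auto
    have "(transpose_mat E' * E') $$ (a,b) = col E' a \<bullet> col E' b" using E'c a b by simp
    also have "\<dots> = (if a = b then 1 else 0)"
    proof (cases "a < j")
      case True
      show ?thesis
      proof (cases "b < j")
        case True
        then show ?thesis using \<open>a < j\<close> colE' a b EEij by simp
      next
        case False
        then have "b = j" using b by simp
        then show ?thesis using \<open>a < j\<close> colE' a b orth by simp
      qed
    next
      case False
      then have aj: "a = j" using a by simp
      show ?thesis
      proof (cases "b < j")
        case True
        then have "y0 \<bullet> col E b = col E b \<bullet> y0" using y0 E by (intro comm_scalar_prod[of _ m]) auto
        then show ?thesis using aj True colE' a b orth by simp
      next
        case False
        then have "b = j" using b by simp
        then show ?thesis using aj colE' a b y0 by simp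
      qed
    qed
    finally show "(transpose_mat E' * E') $$ (a,b) = 1\<^sub>m (Suc j) $$ (a,b)" using a b by simp
  qed (use E'c in auto)
  show ?case
  proof (intro exI[of _ E'] exI[of _ "lam(j := mu)"] conjI allI impI)
    show "E' \<in> carrier_mat m (Suc j)" by (rule E'c)
    show "transpose_mat E' * E' = 1\<^sub>m (Suc j)" by (rule E'E')
    fix i assume i: "i < Suc j"
    show "(A * transpose_mat A) *\<^sub>v col E' i = (lam(j := mu)) i \<cdot>\<^sub>v col E' i"
      using colE'[OF i] eig eigy0 i by (cases "i < j") auto
    show "(lam(j := mu)) i > 0" using eig mupos i by (cases "i < j") auto
  qed
qed



lemma eig_finite: assumes "B \<in> carrier_mat n n"
  shows "finite {l. eigenvalue B (l::real)}"
proof -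
  have "char_poly B \<noteq> 0" using degree_monic_char_poly[OF assms] by (metis coeff_0 zero_neq_one)
  then have "finite {l. poly (char_poly B) l = 0}" by (rule poly_roots_finite)
  then show ?thesis using eigenvalue_root_char_poly[OF assms] by simp
qed

lemma pos_sing_finite: assumes A: "A \<in> carrier_mat m n"
  shows "finite {s \<in> sing_vals A. s > 0}"
proof -
  have "{s \<in> sing_vals A. s > 0} \<subseteq> sqrt ` {l. eigenvalue (transpose_mat A * A) l}"
  proof
    fix s assume "s \<in> {s \<in> sing_vals A. s > 0}"
    then have "s \<ge> 0" "eigenvalue (transpose_mat A * A) (s^2)" unfolding sing_vals_def by auto
    then show "s \<in> sqrt ` {l. eigenvalue (transpose_mat A * A) l}"
      by (intro image_eqI[of _ _ "s^2"]) auto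
  qed
  moreover have "finite (sqrt ` {l. eigenvalue (transpose_mat A * A) l})"
    using eig_finite[of "transpose_mat A * A" n] A by simp
  ultimately show ?thesis by (rule finite_subset)
qed

lemma eig_to_sing:
  fixes A :: "real mat"
  assumes A: "A \<in> carrier_mat m n" and y: "y \<in> carrier_vec m" "y \<noteq> 0\<^sub>v m"
    and ev: "(A * transpose_mat A) *\<^sub>v y = lam \<cdot>\<^sub>v y" and lp: "lam > 0"
  shows "sqrt lam \<in> {s \<in> sing_vals A. s > 0}"
proof -
  define v where "v = transpose_mat A *\<^sub>v y"
  have vc: "v \<in> carrier_vec n" unfolding v_def using A y by simp
  have "v \<bullet> v = y \<bullet> ((A * transpose_mat A) *\<^sub>v y)" unfolding v_def by (rule f_eq[OF A y(1) y(1)])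
  also have "\<dots> = lam * (y \<bullet> y)" using ev y by simp
  finally have vv: "v \<bullet> v = lam * (y \<bullet> y)" .
  have "y \<bullet> y \<noteq> 0" using sp_self_zero[OF y(1)] y(2) by auto
  then have "v \<bullet> v \<noteq> 0" using vv lp by simp
  then have v0: "v \<noteq> 0\<^sub>v n" by auto
  have e1: "(transpose_mat A * A) *\<^sub>v v = transpose_mat A *\<^sub>v (A *\<^sub>v v)" using A vc by simp
  have e2: "A *\<^sub>v v = (A * transpose_mat A) *\<^sub>v y" unfolding v_def using A y by simp
  have e3: "transpose_mat A *\<^sub>v (lam \<cdot>\<^sub>v y) = lam \<cdot>\<^sub>v v" unfolding v_def
    by (rule mult_mat_vec) (use A y in auto)
  have "(transpose_mat A * A) *\<^sub>v v = lam \<cdot>\<^sub>v v" unfolding e1 e2 ev e3 ..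
  then have "eigenvalue (transpose_mat A * A) lam"
    unfolding eigenvalue_def eigenvector_def using vc v0 A by auto
  then show ?thesis using lp unfolding sing_vals_def by simp
qed

lemma sigma_min_facts:
  fixes A :: "real mat"
  assumes A: "A \<in> carrier_mat m n" and y: "y \<in> carrier_vec m" "y \<noteq> 0\<^sub>v m"
    and ev: "(A * transpose_mat A) *\<^sub>v y = lam \<cdot>\<^sub>v y" and lp: "lam > 0"
  shows "sigma_min A > 0" "(sigma_min A)^2 \<le> lam"
proof -
  have mem: "sqrt lam \<in> {s \<in> sing_vals A. s > 0}" by (rule eig_to_sing[OF A y ev lp])
  have fin: "finite {s \<in> sing_vals A. s > 0}" by (rule pos_sing_finite[OF A])
  have "sigma_min A \<in> {s \<in> sing_vals A. s > 0}" unfolding sigma_min_def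
    by (rule Min_in[OF fin]) (use mem in auto)
  then show sp: "sigma_min A > 0" by simp
  have "sigma_min A \<le> sqrt lam" unfolding sigma_min_def by (rule Min_le[OF fin mem])
  then have "(sigma_min A)^2 \<le> (sqrt lam)^2" using sp by (intro power_mono) auto
  then show "(sigma_min A)^2 \<le> lam" using lp by simp
qed

lemma diag_row: assumes "i < k"
  shows "row (mat k k (\<lambda>(a,b). if a = b then lam a else (0::real))) i = lam i \<cdot>\<^sub>v unit_vec k i"
  using assms by (auto intro!: eq_vecI simp: unit_vec_def)

lemma diag_col: assumes "i < k"
  shows "col (mat k k (\<lambda>(a,b). if a = b then lam a else (0::real))) i = lam i \<cdot>\<^sub>v unit_vec k i"
  using assms by (auto intro!: eq_vecI simp: unit_vec_def)

lemma mat_unit: assumes "(E::real mat) \<in> carrier_mat m k" "i < k" shows "E *\<^sub>v unit_vec k i = col E i"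
  using assms by (auto intro!: eq_vecI)

lemma rayleigh_lower:
  fixes A E :: "real mat"
  assumes A: "A \<in> carrier_mat m n" and E: "E \<in> carrier_mat m k" and EE: "transpose_mat E * E = 1\<^sub>m k"
    and eig: "\<forall>i<k. (A * transpose_mat A) *\<^sub>v col E i = lam i \<cdot>\<^sub>v col E i \<and> lam i \<ge> s"
    and c: "c \<in> carrier_vec k"
  shows "s * ((E *\<^sub>v c) \<bullet> (E *\<^sub>v c)) \<le> (transpose_mat A *\<^sub>v (E *\<^sub>v c)) \<bullet> (transpose_mat A *\<^sub>v (E *\<^sub>v c))"
    "(E *\<^sub>v c) \<bullet> (E *\<^sub>v c) = c \<bullet> c"
proof -
  define M where "M = A * transpose_mat A"
  have Mc: "M \<in> carrier_mat m m" using A unfolding M_def by simp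
  define D where "D = mat k k (\<lambda>(a,b). if a = b then lam a else (0::real))"
  have Dc: "D \<in> carrier_mat k k" unfolding D_def by simp
  have ME: "M * E = E * D"
  proof (rule mat_col_eqI)
    fix b assume "b < dim_col (E * D)"
    then have b: "b < k" using Dc by simp
    have "col (M * E) b = M *\<^sub>v col E b" using Mc E b by simp
    also have "\<dots> = lam b \<cdot>\<^sub>v col E b" using eig b unfolding M_def by simp
    also have "\<dots> = col (E * D) b"
    proof -
      have "col (E * D) b = E *\<^sub>v col D b" using E Dc b by simp
      also have "\<dots> = E *\<^sub>v (lam b \<cdot>\<^sub>v unit_vec k b)" unfolding D_def by (simp add: diag_col[OF b])
      also have "\<dots> = lam b \<cdot>\<^sub>v (E *\<^sub>v unit_vec k b)" by (rule mult_mat_vec) (use E in auto)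
      also have "\<dots> = lam b \<cdot>\<^sub>v col E b" using mat_unit[OF E b] by simp
      finally show ?thesis by simp
    qed
    finally show "col (M * E) b = col (E * D) b" .
  qed (use Mc E Dc in auto)
  define y where "y = E *\<^sub>v c"
  have yc: "y \<in> carrier_vec m" unfolding y_def using E c by simp
  have Dcv: "D *\<^sub>v c \<in> carrier_vec k" using Dc c by simp
  have My: "M *\<^sub>v y = E *\<^sub>v (D *\<^sub>v c)"
  proof -
    have "M *\<^sub>v y = (M * E) *\<^sub>v c" unfolding y_def using Mc E c by simp
    also have "\<dots> = (E * D) *\<^sub>v c" using ME by simp
    also have "\<dots> = E *\<^sub>v (D *\<^sub>v c)" using E Dc c by simp
    finally show ?thesis .
  qed
  have yy: "y \<bullet> y = c \<bullet> c" unfolding y_def using AtA_sp[OF E c c] EE c by simp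
  then show "(E *\<^sub>v c) \<bullet> (E *\<^sub>v c) = c \<bullet> c" unfolding y_def .
  have "(transpose_mat A *\<^sub>v y) \<bullet> (transpose_mat A *\<^sub>v y) = y \<bullet> (M *\<^sub>v y)"
    unfolding M_def by (rule f_eq[OF A yc yc])
  also have "\<dots> = (E *\<^sub>v c) \<bullet> (E *\<^sub>v (D *\<^sub>v c))" by (simp only: My) (simp add: y_def)
  also have "\<dots> = c \<bullet> (D *\<^sub>v c)" using AtA_sp[OF E c Dcv] EE Dcv by simp
  also have "\<dots> = (\<Sum>i<k. lam i * (c $ i)^2)"
  proof -
    have "c \<bullet> (D *\<^sub>v c) = (\<Sum>i\<in>{0..<k}. c $ i * (D *\<^sub>v c) $ i)" using Dcv unfolding scalar_prod_def by (simp only: carrier_vecD)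
    also have "\<dots> = (\<Sum>i\<in>{0..<k}. lam i * (c $ i)^2)"
    proof (rule sum.cong)
      fix i assume "i \<in> {0..<k}"
      then have i: "i < k" by simp
      have "(D *\<^sub>v c) $ i = row D i \<bullet> c" using Dc i by simp
      also have "\<dots> = lam i * c $ i" unfolding D_def diag_row[OF i] using c i by simp
      finally show "c $ i * (D *\<^sub>v c) $ i = lam i * (c $ i)^2" by (simp add: power2_eq_square)
    qed simp
    finally show ?thesis by (simp add: atLeast0LessThan)
  qed
  also have "\<dots> \<ge> (\<Sum>i<k. s * (c $ i)^2)" using eig by (intro sum_mono mult_right_mono) auto
  finally have "(\<Sum>i<k. s * (c $ i)^2) \<le> (transpose_mat A *\<^sub>v y) \<bullet> (transpose_mat A *\<^sub>v y)" .
  moreover have "(\<Sum>i<k. s * (c $ i)^2) = s * (y \<bullet> y)" unfolding yy using c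
    by (simp add: sp_self_sum sum_distrib_left)
  ultimately show "s * ((E *\<^sub>v c) \<bullet> (E *\<^sub>v c)) \<le> (transpose_mat A *\<^sub>v (E *\<^sub>v c)) \<bullet> (transpose_mat A *\<^sub>v (E *\<^sub>v c))"
    unfolding y_def by simp
qed



lemma pert_lower:
  fixes X Y :: "real mat"
  assumes X: "X \<in> carrier_mat r c" and Y: "Y \<in> carrier_mat r' c" and x: "x \<in> carrier_vec c"
  shows "(X *\<^sub>v x) \<bullet> (X *\<^sub>v x) - frob_norm (transpose_mat X * X - transpose_mat Y * Y) * (x \<bullet> x)
     \<le> (Y *\<^sub>v x) \<bullet> (Y *\<^sub>v x)"
proof -
  have XX: "transpose_mat X * X \<in> carrier_mat c c" using X by simp
  have YY: "transpose_mat Y * Y \<in> carrier_mat c c" using Y by simp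
  have "x \<bullet> ((transpose_mat X * X - transpose_mat Y * Y) *\<^sub>v x)
      = x \<bullet> ((transpose_mat X * X) *\<^sub>v x) - x \<bullet> ((transpose_mat Y * Y) *\<^sub>v x)"
    using XX YY x by (simp add: minus_mult_distrib_mat_vec[of _ c c] scalar_prod_minus_distrib[of _ c])
  also have "\<dots> = (X *\<^sub>v x) \<bullet> (X *\<^sub>v x) - (Y *\<^sub>v x) \<bullet> (Y *\<^sub>v x)"
    using AtA_sp[OF X x x] AtA_sp[OF Y x x] by simp
  finally have eq: "x \<bullet> ((transpose_mat X * X - transpose_mat Y * Y) *\<^sub>v x) = (X *\<^sub>v x) \<bullet> (X *\<^sub>v x) - (Y *\<^sub>v x) \<bullet> (Y *\<^sub>v x)" .
  have "\<bar>x \<bullet> ((transpose_mat X * X - transpose_mat Y * Y) *\<^sub>v x)\<bar>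
     \<le> frob_norm (transpose_mat X * X - transpose_mat Y * Y) * (x \<bullet> x)"
    by (rule quad_bound[of _ c]) (use XX YY x minus_carrier_mat in auto)
  then show ?thesis unfolding eq by linarith
qed

lemma sample_cols_frob:
  fixes A :: "real mat"
  assumes A: "A \<in> carrier_mat m n" and p: "p > 0" and F: "frob_norm A > 0"
  shows "frob_norm (sample_cols A p jx) \<le> frob_norm A"
proof -
  define S where "S = sample_cols A p jx"
  define F2 where "F2 = fro2 A"
  have F2p: "F2 > 0" using F frob_sq[of A] unfolding F2_def by (metis zero_less_power2 less_irrefl)
  have Fsq: "(frob_norm A)^2 = F2" unfolding F2_def by (rule frob_sq)
  have Sc: "S \<in> carrier_mat m p" unfolding S_def sample_cols_def using A by simp
  define cs where "cs j = (\<Sum>a<m. (A $$ (a,j))^2)" for j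
  have cs0: "cs j \<ge> 0" for j unfolding cs_def by (rule sum_nonneg) simp
  have termb: "(\<Sum>a<m. (S $$ (a,t))^2) \<le> F2 / real p" if t: "t < p" for t
  proof -
    define j where "j = jx t"
    have P: "col_prob A j = cs j / F2" unfolding col_prob_def cs_def F2_def using A Fsq F2_def by simp
    have Pn: "real p * col_prob A j \<ge> 0" using P cs0 F2p p by simp
    have "(\<Sum>a<m. (S $$ (a,t))^2) = (\<Sum>a<m. (A $$ (a,j))^2 / (real p * col_prob A j))"
      unfolding S_def sample_cols_def using A t Pn by (intro sum.cong) (auto simp: power_divide j_def)
    also have "\<dots> = cs j / (real p * col_prob A j)" unfolding cs_def by (simp add: sum_divide_distrib)
    also have "\<dots> \<le> F2 / real p"
    proof (cases "cs j = 0")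
      case True then show ?thesis using F2p p by simp
    next
      case False
      then have "cs j > 0" using cs0 by (simp add: less_le)
      then show ?thesis unfolding P using F2p p by (simp add: field_simps)
    qed
    finally show ?thesis .
  qed
  have "fro2 S = (\<Sum>t<p. \<Sum>a<m. (S $$ (a,t))^2)" unfolding fro2_def using Sc by (simp add: sum.swap[of _ "{..<m}"])
  also have "\<dots> \<le> (\<Sum>t<p. F2 / real p)" by (rule sum_mono) (use termb in auto)
  also have "\<dots> = F2" using p by simp
  finally have "fro2 S \<le> F2" .
  then show ?thesis unfolding S_def F2_def frob_fro2 by simp
qed



lemma orth_norm: assumes U: "U \<in> carrier_mat r p" and UU: "transpose_mat U * U = 1\<^sub>m p" and w: "w \<in> carrier_vec p"
  shows "(U *\<^sub>v w) \<bullet> (U *\<^sub>v w) = w \<bullet> (w::real vec)"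
  using AtA_sp[OF U w w] UU w by simp

lemma diag_row_gen: assumes D: "(D::real mat) \<in> carrier_mat p p" and diag: "\<forall>a<p. \<forall>b<p. a \<noteq> b \<longrightarrow> D $$ (a,b) = 0"
  and i: "i < p"
  shows "row D i = D $$ (i,i) \<cdot>\<^sub>v unit_vec p (i::nat)" "col D i = D $$ (i,i) \<cdot>\<^sub>v unit_vec p (i::nat)"
  using D diag i by (auto intro!: eq_vecI simp: unit_vec_def)

lemma diag_mult: assumes D: "D \<in> carrier_mat p p" and diag: "\<forall>a<p. \<forall>b<p. a \<noteq> b \<longrightarrow> D $$ (a,b) = 0"
  and z: "z \<in> carrier_vec p" and i: "i < p"
  shows "(D *\<^sub>v z) $ i = D $$ (i,i) * (z $ i :: real)"
proof -
  have "(D *\<^sub>v z) $ i = row D i \<bullet> z" using D i by simp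
  also have "\<dots> = D $$ (i,i) * (unit_vec p i \<bullet> z)" unfolding diag_row_gen(1)[OF D diag i] using z by simp
  also have "unit_vec p i \<bullet> z = z $ i" using z i by simp
  finally show ?thesis .
qed

lemma sv_lower:
  fixes S E Uf Df Vf W :: "real mat"
  assumes S: "S \<in> carrier_mat m p" and E: "E \<in> carrier_mat m k" and EE: "transpose_mat E * E = 1\<^sub>m k"
    and k1: "1 \<le> k"
    and ray: "\<And>c. c \<in> carrier_vec k \<Longrightarrow>
       q * ((E *\<^sub>v c) \<bullet> (E *\<^sub>v c)) \<le> (transpose_mat S *\<^sub>v (E *\<^sub>v c)) \<bullet> (transpose_mat S *\<^sub>v (E *\<^sub>v c))"
    and q: "q > 0"
    and Wb: "\<And>x. x \<in> carrier_vec p \<Longrightarrow> (S *\<^sub>v x) \<bullet> (S *\<^sub>v x) - e * (x \<bullet> x) \<le> (W *\<^sub>v x) \<bullet> (W *\<^sub>v x)"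
    and Uf_dim: "Uf \<in> carrier_mat p p" and Df_dim: "Df \<in> carrier_mat p p"
    and Vf_dim: "Vf \<in> carrier_mat p p"
    and Uf_orth: "transpose_mat Uf * Uf = 1\<^sub>m p"
    and Vf_orth: "transpose_mat Vf * Vf = 1\<^sub>m p"
    and Df_diag: "\<forall>a<p. \<forall>b<p. a \<noteq> b \<longrightarrow> Df $$ (a,b) = 0"
    and Df_nonneg: "\<forall>a<p. 0 \<le> Df $$ (a,a)"
    and Df_sorted: "\<forall>a b. a \<le> b \<longrightarrow> b < p \<longrightarrow> Df $$ (b,b) \<le> Df $$ (a,a)"
    and W_svd: "W = Uf * Df * transpose_mat Vf"
  shows "k \<le> p \<and> q - e \<le> (Df $$ (k - 1, k - 1))^2"
proof -
  have St: "transpose_mat S \<in> carrier_mat p m" using S by simp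
  have cpos: "c \<bullet> c > 0" if "c \<in> carrier_vec k" "c \<noteq> 0\<^sub>v k" for c :: "real vec"
  proof -
    have "c \<bullet> c \<noteq> 0" using sp_self_zero[OF that(1)] that(2) by blast
    then show ?thesis using sp_self_nonneg[of c] by linarith
  qed
  have yy: "(E *\<^sub>v c) \<bullet> (E *\<^sub>v c) = c \<bullet> c" if "c \<in> carrier_vec k" for c
    by (rule orth_norm[OF E EE that])
  have kp: "k \<le> p"
  proof (rule ccontr)
    assume "\<not> k \<le> p"
    then have "p < k" by simp
    obtain c where c: "c \<in> carrier_vec k" "c \<noteq> 0\<^sub>v k" "(transpose_mat S * E) *\<^sub>v c = 0\<^sub>v p"
      using wide_kernel[of "transpose_mat S * E" p k] St E \<open>p < k\<close> by auto
    have "transpose_mat S *\<^sub>v (E *\<^sub>v c) = 0\<^sub>v p" using c St E by simp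
    then have "q * (c \<bullet> c) \<le> 0" using ray[OF c(1)] yy[OF c(1)] by simp
    moreover have "q * (c \<bullet> c) > 0" using q cpos[OF c(1,2)] by simp
    ultimately show False by simp
  qed
  define Jt where "Jt = mat (k - 1) p (\<lambda>(a,b). if a = b then (1::real) else 0)"
  have Jtc: "Jt \<in> carrier_mat (k - 1) p" unfolding Jt_def by simp
  define B where "B = Jt * (transpose_mat Vf * (transpose_mat S * E))"
  have Bc: "B \<in> carrier_mat (k - 1) k" unfolding B_def using Jtc Vf_dim St E by simp
  obtain c where c: "c \<in> carrier_vec k" "c \<noteq> 0\<^sub>v k" "B *\<^sub>v c = 0\<^sub>v (k - 1)"
    using wide_kernel[OF Bc] k1 by auto
  define y where "y = E *\<^sub>v c"
  define x where "x = transpose_mat S *\<^sub>v y"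
  define z where "z = transpose_mat Vf *\<^sub>v x"
  have yc: "y \<in> carrier_vec m" unfolding y_def using E c by simp
  have xc: "x \<in> carrier_vec p" unfolding x_def using St yc by simp
  have zc: "z \<in> carrier_vec p" unfolding z_def using Vf_dim xc by simp
  have M2: "transpose_mat S * E \<in> carrier_mat p k" using St E by simp
  have M1: "transpose_mat Vf * (transpose_mat S * E) \<in> carrier_mat p k" using Vf_dim M2 by simp
  have e1: "B *\<^sub>v c = Jt *\<^sub>v ((transpose_mat Vf * (transpose_mat S * E)) *\<^sub>v c)"
    unfolding B_def by (rule assoc_mult_mat_vec[OF Jtc M1 c(1)])
  have e2: "(transpose_mat Vf * (transpose_mat S * E)) *\<^sub>v c = transpose_mat Vf *\<^sub>v ((transpose_mat S * E) *\<^sub>v c)"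
    by (rule assoc_mult_mat_vec) (use Vf_dim M2 c in auto)
  have e3: "(transpose_mat S * E) *\<^sub>v c = transpose_mat S *\<^sub>v (E *\<^sub>v c)"
    by (rule assoc_mult_mat_vec[OF St E c(1)])
  have Bcz: "B *\<^sub>v c = Jt *\<^sub>v z" unfolding e1 e2 e3 z_def x_def y_def ..
  have z0: "z $ i = 0" if i: "i < k - 1" for i
  proof -
    have "(Jt *\<^sub>v z) $ i = 0" using c(3) Bcz i by simp
    moreover have "(Jt *\<^sub>v z) $ i = z $ i"
    proof -
      have "row Jt i = unit_vec p i" unfolding Jt_def using i kp by (auto intro!: eq_vecI simp: unit_vec_def)
      then show ?thesis using Jtc i zc kp by simp
    qed
    ultimately show ?thesis by simp
  qed
  have ypos: "y \<bullet> y > 0" unfolding y_def yy[OF c(1)] by (rule cpos[OF c(1,2)])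
  define X where "X = x \<bullet> x"
  have Xq: "q * (y \<bullet> y) \<le> X" unfolding X_def x_def y_def by (rule ray[OF c(1)])
  define Z where "Z = (S *\<^sub>v x) \<bullet> (S *\<^sub>v x)"
  have Sxc: "S *\<^sub>v x \<in> carrier_vec m" using S xc by simp
  have "X = y \<bullet> (S *\<^sub>v x)" unfolding X_def using transp_sp[OF S xc yc] unfolding x_def by simp
  then have "X^2 \<le> (y \<bullet> y) * Z" unfolding Z_def using CS_vec[OF yc Sxc] by simp
  moreover have "q * (y \<bullet> y) * X \<le> X * X" using Xq ypos q by (intro mult_right_mono) (auto simp: X_def sp_self_nonneg)
  ultimately have "(y \<bullet> y) * (q * X) \<le> (y \<bullet> y) * Z" by (simp add: power2_eq_square algebra_simps)
  then have qXZ: "q * X \<le> Z" using ypos by simp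
  have Wx: "(q - e) * X \<le> (W *\<^sub>v x) \<bullet> (W *\<^sub>v x)" using Wb[OF xc] qXZ unfolding Z_def X_def
    by (simp add: algebra_simps)
  have Dzc: "Df *\<^sub>v z \<in> carrier_vec p" using Df_dim zc by simp
  have "W *\<^sub>v x = Uf *\<^sub>v (Df *\<^sub>v z)" unfolding W_svd z_def using Uf_dim Df_dim Vf_dim xc
    by (simp add: assoc_mult_mat_vec[of _ p p _ p])
  then have "(W *\<^sub>v x) \<bullet> (W *\<^sub>v x) = (Df *\<^sub>v z) \<bullet> (Df *\<^sub>v z)" using orth_norm[OF Uf_dim Uf_orth Dzc] by simp
  also have "\<dots> = (\<Sum>i<p. ((Df *\<^sub>v z) $ i)^2)" using Dzc by (simp only: sp_self_sum carrier_vecD)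
  also have "\<dots> = (\<Sum>i<p. (Df $$ (i,i) * z $ i)^2)" using diag_mult[OF Df_dim Df_diag zc]
    by (intro sum.cong) auto
  also have "\<dots> \<le> (\<Sum>i<p. (Df $$ (k-1,k-1))^2 * (z $ i)^2)"
  proof (rule sum_mono)
    fix i assume "i \<in> {..<p}"
    then have i: "i < p" by simp
    show "(Df $$ (i,i) * z $ i)^2 \<le> (Df $$ (k-1,k-1))^2 * (z $ i)^2"
    proof (cases "i < k - 1")
      case True then show ?thesis using z0 by simp
    next
      case False
      then have "Df $$ (i,i) \<le> Df $$ (k-1,k-1)" using Df_sorted i by simp
      moreover have "0 \<le> Df $$ (i,i)" using Df_nonneg i by simp
      ultimately have "(Df $$ (i,i))^2 \<le> (Df $$ (k-1,k-1))^2" by (intro power_mono) auto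
      then show ?thesis by (simp add: power_mult_distrib mult_right_mono)
    qed
  qed
  also have "\<dots> = (Df $$ (k-1,k-1))^2 * (z \<bullet> z)" using zc by (simp add: sp_self_sum sum_distrib_left)
  also have "z \<bullet> z = X"
  proof -
    have VV: "Vf * transpose_mat Vf = 1\<^sub>m p"
      using mat_mult_left_right_inverse[of "transpose_mat Vf" p Vf] Vf_dim Vf_orth by simp
    have "z \<bullet> z = x \<bullet> ((Vf * transpose_mat Vf) *\<^sub>v x)" unfolding z_def
      using AtA_sp[of "transpose_mat Vf" p p x x] Vf_dim xc by simp
    then show ?thesis unfolding VV X_def using xc by simp
  qed
  finally have "(q - e) * X \<le> (Df $$ (k-1,k-1))^2 * X" using Wx by simp
  moreover have "X > 0" using Xq ypos q by (smt (verit) mult_pos_pos)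
  ultimately have "q - e \<le> (Df $$ (k-1,k-1))^2" by simp
  then show ?thesis using kp by simp
qed



lemma VVt: assumes "Vf \<in> carrier_mat p p" "transpose_mat Vf * Vf = 1\<^sub>m p" and that: "z \<in> carrier_vec p"
  shows "(transpose_mat Vf *\<^sub>v z) \<bullet> (transpose_mat Vf *\<^sub>v z) = z \<bullet> (z::real vec)"
proof -
  have VV: "Vf * transpose_mat Vf = 1\<^sub>m p"
    using mat_mult_left_right_inverse[of "transpose_mat Vf" p Vf] assms by simp
  have "(transpose_mat Vf *\<^sub>v z) \<bullet> (transpose_mat Vf *\<^sub>v z) = z \<bullet> ((Vf * transpose_mat Vf) *\<^sub>v z)"
    using AtA_sp[of "transpose_mat Vf" p p z z] assms that by simp
  then show ?thesis unfolding VV using that by simp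
qed

lemma sv_upper:
  fixes S Uf Df Vf W V Uhat :: "real mat"
  assumes S: "S \<in> carrier_mat m p" and kp: "k \<le> p" and k1: "1 \<le> k"
    and Uf_dim: "Uf \<in> carrier_mat p p" and Df_dim: "Df \<in> carrier_mat p p"
    and Vf_dim: "Vf \<in> carrier_mat p p"
    and Uf_orth: "transpose_mat Uf * Uf = 1\<^sub>m p"
    and Vf_orth: "transpose_mat Vf * Vf = 1\<^sub>m p"
    and Df_diag: "\<forall>a<p. \<forall>b<p. a \<noteq> b \<longrightarrow> Df $$ (a,b) = 0"
    and W_svd: "W = Uf * Df * transpose_mat Vf"
    and dpos: "Df $$ (k-1,k-1) > 0"
    and dmin: "\<And>i. i < k \<Longrightarrow> Df $$ (k-1,k-1) \<le> Df $$ (i,i)"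
    and V_def: "V = mat p k (\<lambda>(a,b). Vf $$ (a,b))"
    and Uhat_def: "Uhat = S * V * mat k k (\<lambda>(a,b). if a = b then 1 / Df $$ (a,a) else 0)"
  shows "Uhat \<in> carrier_mat m k"
    "fro2 (transpose_mat Uhat * Uhat - 1\<^sub>m k) \<le> fro2 (transpose_mat S * S - transpose_mat W * W) / (Df $$ (k-1,k-1))^4"
proof -
  define d where "d i = Df $$ (i,i)" for i
  define dl where "dl = Df $$ (k-1,k-1)"
  define Dinv where "Dinv = mat k k (\<lambda>(a,b). if a = b then 1 / Df $$ (a,a) else (0::real))"
  have dp: "d i > 0" if "i < k" for i using dmin[OF that] dpos unfolding d_def by simp
  have Vc: "V \<in> carrier_mat p k" unfolding V_def by simp
  have Dc: "Dinv \<in> carrier_mat k k" unfolding Dinv_def by simp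
  have SVc: "S * V \<in> carrier_mat m k" using S Vc by simp
  have Uc: "Uhat \<in> carrier_mat m k" unfolding Uhat_def Dinv_def[symmetric] using SVc Dc by simp
  then show "Uhat \<in> carrier_mat m k" .
  have Wc: "W \<in> carrier_mat p p" unfolding W_svd using Uf_dim Df_dim Vf_dim by (meson mult_carrier_mat transpose_carrier_mat)
  define v where "v a = col Vf a" for a
  have vc: "v a \<in> carrier_vec p" for a unfolding v_def using col_dim[of Vf a] Vf_dim by (metis carrier_matD(1))
  have colV: "col V a = v a" if "a < k" for a unfolding V_def v_def using that kp Vf_dim by (auto intro!: eq_vecI)
  have colU: "col Uhat a = (1 / d a) \<cdot>\<^sub>v (S *\<^sub>v v a)" if a: "a < k" for a
  proof -
    have "col Uhat a = (S * V) *\<^sub>v col Dinv a" unfolding Uhat_def Dinv_def[symmetric] using SVc Dc a by simp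
    also have "col Dinv a = (1 / d a) \<cdot>\<^sub>v unit_vec k a" unfolding Dinv_def d_def using a
      by (auto intro!: eq_vecI simp: unit_vec_def)
    also have "(S * V) *\<^sub>v ((1 / d a) \<cdot>\<^sub>v unit_vec k a) = (1 / d a) \<cdot>\<^sub>v ((S * V) *\<^sub>v unit_vec k a)"
      by (rule mult_mat_vec) (use SVc in auto)
    also have "(S * V) *\<^sub>v unit_vec k a = col (S * V) a" by (rule mat_unit[OF SVc a])
    also have "col (S * V) a = S *\<^sub>v v a" using S Vc a colV by simp
    finally show ?thesis .
  qed
  have Wv: "W *\<^sub>v v a = d a \<cdot>\<^sub>v col Uf a" if a: "a < k" for a
  proof -
    have ap: "a < p" using a kp by simp
    have "transpose_mat Vf *\<^sub>v v a = col (transpose_mat Vf * Vf) a" unfolding v_def using Vf_dim ap by simp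
    also have "\<dots> = unit_vec p a" unfolding Vf_orth using ap by (auto intro!: eq_vecI simp: unit_vec_def)
    finally have t1: "transpose_mat Vf *\<^sub>v v a = unit_vec p a" .
    have "W *\<^sub>v v a = Uf *\<^sub>v (Df *\<^sub>v (transpose_mat Vf *\<^sub>v v a))" unfolding W_svd using Uf_dim Df_dim Vf_dim vc
      by (simp add: assoc_mult_mat_vec[of _ p p _ p])
    also have "Df *\<^sub>v (transpose_mat Vf *\<^sub>v v a) = d a \<cdot>\<^sub>v unit_vec p a"
      unfolding t1 mat_unit[OF Df_dim ap] diag_row_gen(2)[OF Df_dim Df_diag ap] d_def ..
    also have "Uf *\<^sub>v (d a \<cdot>\<^sub>v unit_vec p a) = d a \<cdot>\<^sub>v (Uf *\<^sub>v unit_vec p a)"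
      by (rule mult_mat_vec) (use Uf_dim in auto)
    also have "Uf *\<^sub>v unit_vec p a = col Uf a" by (rule mat_unit[OF Uf_dim ap])
    finally show ?thesis .
  qed
  define Dl where "Dl = transpose_mat S * S - transpose_mat W * W"
  have Dlc: "Dl \<in> carrier_mat p p" unfolding Dl_def using S Wc by (meson minus_carrier_mat mult_carrier_mat transpose_carrier_mat)
  define H where "H = transpose_mat Vf * (Dl * Vf)"
  have Hc: "H \<in> carrier_mat p p" unfolding H_def using Vf_dim Dlc by (meson mult_carrier_mat transpose_carrier_mat)
  have Hab: "H $$ (a,b) = v a \<bullet> (Dl *\<^sub>v v b)" if "a < p" "b < p" for a b
    unfolding H_def v_def using that Vf_dim Dlc by simp
  have Gab: "(transpose_mat Uhat * Uhat - 1\<^sub>m k) $$ (a,b) = H $$ (a,b) / (d a * d b)"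
    if a: "a < k" and b: "b < k" for a b
  proof -
    have ap: "a < p" and bp: "b < p" using a b kp by auto
    have da: "d a > 0" and db: "d b > 0" using dp a b by auto
    have "(transpose_mat Uhat * Uhat) $$ (a,b) = col Uhat a \<bullet> col Uhat b" using Uc a b by simp
    also have "\<dots> = (1 / d a) * (1 / d b) * ((S *\<^sub>v v a) \<bullet> (S *\<^sub>v v b))"
      unfolding colU[OF a] colU[OF b] using S vc by simp
    also have "(S *\<^sub>v v a) \<bullet> (S *\<^sub>v v b) = v a \<bullet> ((transpose_mat S * S) *\<^sub>v v b)" by (rule AtA_sp[OF S vc vc])
    finally have e1: "(transpose_mat Uhat * Uhat) $$ (a,b) = (1 / d a) * (1 / d b) * (v a \<bullet> ((transpose_mat S * S) *\<^sub>v v b))" .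
    have "(W *\<^sub>v v a) \<bullet> (W *\<^sub>v v b) = d a * d b * (col Uf a \<bullet> col Uf b)"
      unfolding Wv[OF a] Wv[OF b] using Uf_dim by simp
    also have "col Uf a \<bullet> col Uf b = (transpose_mat Uf * Uf) $$ (a,b)" using Uf_dim ap bp by simp
    also have "\<dots> = (if a = b then 1 else 0)" unfolding Uf_orth using ap bp by simp
    finally have "(W *\<^sub>v v a) \<bullet> (W *\<^sub>v v b) = d a * d b * (if a = b then 1 else 0)" .
    moreover have "(W *\<^sub>v v a) \<bullet> (W *\<^sub>v v b) = v a \<bullet> ((transpose_mat W * W) *\<^sub>v v b)" by (rule AtA_sp[OF Wc vc vc])
    ultimately have e2: "v a \<bullet> ((transpose_mat W * W) *\<^sub>v v b) = d a * d b * (if a = b then 1 else 0)" by simp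
    have e3: "v a \<bullet> (Dl *\<^sub>v v b) = v a \<bullet> ((transpose_mat S * S) *\<^sub>v v b) - v a \<bullet> ((transpose_mat W * W) *\<^sub>v v b)"
      unfolding Dl_def using S Wc vc
      by (simp add: minus_mult_distrib_mat_vec[of _ p p] scalar_prod_minus_distrib[of _ p])
    have "(transpose_mat Uhat * Uhat - 1\<^sub>m k) $$ (a,b) = (transpose_mat Uhat * Uhat) $$ (a,b) - (if a = b then 1 else 0)"
      using Uc a b by simp
    also have "\<dots> = (v a \<bullet> ((transpose_mat S * S) *\<^sub>v v b) - d a * d b * (if a = b then 1 else 0)) / (d a * d b)"
      unfolding e1 using da db by (simp add: field_simps)
    also have "\<dots> = H $$ (a,b) / (d a * d b)" unfolding Hab[OF ap bp] e3 e2 ..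
    finally show ?thesis .
  qed
  have dl4: "dl^4 \<le> (d a * d b)^2" if "a < k" "b < k" for a b
  proof -
    have "dl \<le> d a" "dl \<le> d b" "0 < dl" using dmin that dpos unfolding dl_def d_def by auto
    then have "dl * dl \<le> d a * d b" by (intro mult_mono) auto
    then have "(dl * dl)^2 \<le> (d a * d b)^2" using \<open>0 < dl\<close> by (intro power_mono) auto
    then show ?thesis by (simp add: power2_eq_square power4_eq_xxxx)
  qed
  have "fro2 (transpose_mat Uhat * Uhat - 1\<^sub>m k) = (\<Sum>a<k. \<Sum>b<k. (H $$ (a,b) / (d a * d b))^2)"
    unfolding fro2_def using Uc Gab by simp
  also have "\<dots> \<le> (\<Sum>a<k. \<Sum>b<k. (H $$ (a,b))^2 / dl^4)"
  proof (intro sum_mono)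
    fix a b assume "a \<in> {..<k}" "b \<in> {..<k}"
    then have ab: "a < k" "b < k" by auto
    have pos: "0 < dl^4" using dpos unfolding dl_def by simp
    have "(H $$ (a,b) / (d a * d b))^2 = (H $$ (a,b))^2 / (d a * d b)^2" by (simp add: power_divide)
    also have "\<dots> \<le> (H $$ (a,b))^2 / dl^4"
      by (rule divide_left_mono[OF dl4[OF ab]]) (use pos dp[OF ab(1)] dp[OF ab(2)] in auto)
    finally show "(H $$ (a,b) / (d a * d b))^2 \<le> (H $$ (a,b))^2 / dl^4" .
  qed
  also have "\<dots> = (\<Sum>a<k. \<Sum>b<k. (H $$ (a,b))^2) / dl^4" by (simp add: sum_divide_distrib)
  also have "(\<Sum>a<k. \<Sum>b<k. (H $$ (a,b))^2) \<le> (\<Sum>a<p. \<Sum>b<p. (H $$ (a,b))^2)"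
  proof -
    have "(\<Sum>a<k. \<Sum>b<k. (H $$ (a,b))^2) \<le> (\<Sum>a<k. \<Sum>b<p. (H $$ (a,b))^2)"
      by (intro sum_mono sum_mono2) (use kp in auto)
    also have "\<dots> \<le> (\<Sum>a<p. \<Sum>b<p. (H $$ (a,b))^2)"
      by (intro sum_mono2) (use kp in \<open>auto intro!: sum_nonneg\<close>)
    finally show ?thesis .
  qed
  also have "(\<Sum>a<p. \<Sum>b<p. (H $$ (a,b))^2) = fro2 H" unfolding fro2_def using Hc by simp
  also have "fro2 H \<le> fro2 Dl"
  proof -
    have DVc: "Dl * Vf \<in> carrier_mat p p" using Dlc Vf_dim by simp
    have "fro2 H \<le> fro2 (Dl * Vf)" unfolding H_def
      by (rule fro2_left_contr[of _ p p _ p]) (use Vf_dim DVc VVt[OF Vf_dim Vf_orth] in auto)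
    also have "\<dots> \<le> fro2 Dl"
      by (rule fro2_right_contr[of _ p p _ p]) (use Vf_dim Dlc VVt[OF Vf_dim Vf_orth] in auto)
    finally show ?thesis .
  qed
  finally show "fro2 (transpose_mat Uhat * Uhat - 1\<^sub>m k) \<le> fro2 (transpose_mat S * S - transpose_mat W * W) / (Df $$ (k-1,k-1))^4"
    unfolding Dl_def dl_def using dpos by (simp add: divide_right_mono)
qed



lemma final_bounds:
  fixes U :: "real mat"
  assumes U: "U \<in> carrier_mat m k" and k1: "1 \<le> k"
    and Gb: "frob_norm (transpose_mat U * U - 1\<^sub>m k) \<le> beta"
  shows "spec_norm (transpose_mat U * U - 1\<^sub>m k) \<le> frob_norm (transpose_mat U * U - 1\<^sub>m k)
    \<and> frob_norm (transpose_mat U * U - 1\<^sub>m k) \<le> beta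
    \<and> spec_norm (transpose_mat U * U) \<le> 1 + beta
    \<and> spec_norm U \<le> sqrt (1 + beta)
    \<and> frob_norm U \<le> sqrt (real k * (1 + beta))"
proof -
  define P where "P = transpose_mat U * U"
  define G where "G = P - 1\<^sub>m k"
  have Pc: "P \<in> carrier_mat k k" unfolding P_def using U by simp
  have Gc: "G \<in> carrier_mat k k" unfolding G_def using Pc by (meson minus_carrier_mat one_carrier_mat)
  have k0: "0 < k" using k1 by simp
  have s1: "spec_norm G \<le> frob_norm G" by (rule spec_le_frob[OF Gc k0])
  have Px: "P *\<^sub>v x = G *\<^sub>v x + x" if x: "x \<in> carrier_vec k" for x
  proof -
    have "G *\<^sub>v x = P *\<^sub>v x - 1\<^sub>m k *\<^sub>v x" unfolding G_def using Pc x
      by (simp add: minus_mult_distrib_mat_vec[of _ k k])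
    then have "G *\<^sub>v x = P *\<^sub>v x - x" using x by simp
    then show ?thesis using Pc x by (auto intro!: eq_vecI)
  qed
  have s2: "spec_norm P \<le> 1 + beta"
  proof (rule spec_least[OF Pc k0])
    fix x :: "real vec" assume x: "x \<in> carrier_vec k" "vec_norm x = 1"
    have "vec_norm (P *\<^sub>v x) \<le> vec_norm (G *\<^sub>v x) + vec_norm x"
      unfolding Px[OF x(1)] by (rule vec_norm_triangle[of _ k]) (use Gc x in auto)
    also have "vec_norm (G *\<^sub>v x) \<le> spec_norm G * vec_norm x" by (rule spec_upper[OF Gc x(1) k0])
    finally show "vec_norm (P *\<^sub>v x) \<le> 1 + beta" using x(2) s1 Gb unfolding G_def P_def by simp
  qed
  have s3: "spec_norm U \<le> sqrt (1 + beta)"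
  proof (rule spec_least[OF U k0])
    fix x :: "real vec" assume x: "x \<in> carrier_vec k" "vec_norm x = 1"
    have "(vec_norm (U *\<^sub>v x))^2 = x \<bullet> (P *\<^sub>v x)" unfolding vec_norm_sq P_def by (rule AtA_sp[OF U x(1) x(1)])
    also have "\<dots> \<le> vec_norm x * vec_norm (P *\<^sub>v x)" using CS_vec_abs[of x k "P *\<^sub>v x"] Pc x by simp
    also have "\<dots> \<le> 1 + beta" using spec_upper[OF Pc x(1) k0] s2 x(2) by simp
    finally show "vec_norm (U *\<^sub>v x) \<le> sqrt (1 + beta)" using vec_norm_nonneg real_le_rsqrt by blast
  qed
  have diag: "P $$ (j,j) \<le> 1 + beta" if j: "j < k" for j
  proof -
    have "(G $$ (j,j))^2 \<le> (\<Sum>b<k. (G $$ (j,b))^2)" using j by (intro member_le_sum) auto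
    also have "\<dots> \<le> (\<Sum>a<k. \<Sum>b<k. (G $$ (a,b))^2)"
      using j by (intro member_le_sum[of j "{..<k}" "\<lambda>a. \<Sum>b<k. (G $$ (a,b))^2"]) (auto intro!: sum_nonneg)
    also have "\<dots> = (frob_norm G)^2" unfolding frob_sq fro2_def using Gc by simp
    finally have "\<bar>G $$ (j,j)\<bar> \<le> frob_norm G" using abs_le_square_iff[of "G $$ (j,j)" "frob_norm G"] frob_nonneg[of G] by simp
    moreover have "G $$ (j,j) = P $$ (j,j) - 1" unfolding G_def using Pc j by simp
    ultimately show ?thesis using Gb unfolding G_def P_def by simp
  qed
  have "fro2 U = (\<Sum>j<k. col U j \<bullet> col U j)" by (rule fro2_cols[OF U])
  also have "\<dots> = (\<Sum>j<k. P $$ (j,j))" unfolding P_def using U by (intro sum.cong) auto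
  also have "\<dots> \<le> (\<Sum>j<k. 1 + beta)" using diag by (intro sum_mono) auto
  also have "\<dots> = real k * (1 + beta)" by simp
  finally have "frob_norm U \<le> sqrt (real k * (1 + beta))" unfolding frob_fro2 by simp
  then show ?thesis using s1 s2 s3 Gb unfolding G_def P_def by simp
qed



theorem mainTheorem3:
  fixes A S W Uf Df Vf V Uhat :: "real mat"
    and m n r k p :: nat
    and eps delta omega theta beta :: real
    and jx ix :: "nat \<Rightarrow> nat"
  assumes A_dim: "A \<in> carrier_mat m n"
    and A_nz: "A \<noteq> 0\<^sub>m m n"
    and r_def: "r = vec_space.rank m A"
    and k_ge: "1 \<le> k" and k_le: "k \<le> r"
    and eps: "0 < eps" "eps < 1"
    and delta: "0 < delta" "delta < 1"
    and omega_def: "omega = (spec_norm A)^2 * eps^2 /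
          (196 * (frob_norm A * cond_num A + spec_norm A)^2)"
    and theta_pos: "0 < theta"
    and theta_le: "theta \<le> omega * (spec_norm A)^2 /
          ((4 * real k + 3 + 2 * omega) * (cond_num A)^2 * (frob_norm A)^2)"
    and p_def: "p = nat \<lceil>1 / (theta^2 * delta)\<rceil>"
    and js_range: "\<forall>t<p. jx t < n"
    and S_def: "S = sample_cols A p jx"
    and is_range: "\<forall>t<p. ix t < m"
    and W_def: "W = sample_rows S p ix"
    and E1: "frob_norm (A * transpose_mat A - S * transpose_mat S) \<le> theta * (frob_norm A)^2"
    and E2: "frob_norm (transpose_mat S * S - transpose_mat W * W) \<le> theta * (frob_norm S)^2"
    (* a singular value decomposition W = Uf Df Vf^T, singular values in nonincreasing order *)
    and Uf_dim: "Uf \<in> carrier_mat p p" and Df_dim: "Df \<in> carrier_mat p p"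
    and Vf_dim: "Vf \<in> carrier_mat p p"
    and Uf_orth: "transpose_mat Uf * Uf = 1\<^sub>m p"
    and Vf_orth: "transpose_mat Vf * Vf = 1\<^sub>m p"
    and Df_diag: "\<forall>a<p. \<forall>b<p. a \<noteq> b \<longrightarrow> Df $$ (a,b) = 0"
    and Df_nonneg: "\<forall>a<p. 0 \<le> Df $$ (a,a)"
    and Df_sorted: "\<forall>a b. a \<le> b \<longrightarrow> b < p \<longrightarrow> Df $$ (b,b) \<le> Df $$ (a,a)"
    and W_svd: "W = Uf * Df * transpose_mat Vf"
    (* V = (v_1,...,v_k): right singular vectors for sigma_1 >= ... >= sigma_k *)
    and V_def: "V = mat p k (\<lambda>(a,b). Vf $$ (a,b))"
    and Uhat_def: "Uhat = S * V * mat k k (\<lambda>(a,b). if a = b then 1 / Df $$ (a,a) else 0)"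
    and beta_def: "beta = omega / (4 * real k + 3)"
  shows "Df $$ (k - 1, k - 1) > 0
    \<and> spec_norm (transpose_mat Uhat * Uhat - 1\<^sub>m k) \<le> frob_norm (transpose_mat Uhat * Uhat - 1\<^sub>m k)
    \<and> frob_norm (transpose_mat Uhat * Uhat - 1\<^sub>m k) \<le> beta
    \<and> spec_norm (transpose_mat Uhat * Uhat) \<le> 1 + beta
    \<and> spec_norm Uhat \<le> sqrt (1 + beta)
    \<and> frob_norm Uhat \<le> sqrt (real k * (1 + beta))"
proof -
  have A: "A \<in> carrier_mat m n" by (rule A_dim)
  obtain i0 j0 where ij: "i0 < m" "j0 < n" "A $$ (i0,j0) \<noteq> 0"
  proof (rule ccontr)
    assume "\<not> thesis"
    then have "\<forall>i<m. \<forall>j<n. A $$ (i,j) = 0" using that by blast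
    then have "A = 0\<^sub>m m n" using A by (auto intro!: eq_matI)
    then show False using A_nz by simp
  qed
  define a where "a = spec_norm A"
  define F where "F = frob_norm A"
  have apos: "a > 0" unfolding a_def by (rule spec_pos[OF A ij])
  have Fpos: "F > 0"
  proof -
    have "(A $$ (i0,j0))^2 \<le> (\<Sum>j<n. (A $$ (i0,j))^2)" using ij by (intro member_le_sum) auto
    also have "\<dots> \<le> (\<Sum>i<m. \<Sum>j<n. (A $$ (i,j))^2)"
      using ij by (intro member_le_sum[of i0 "{..<m}" "\<lambda>i. \<Sum>j<n. (A $$ (i,j))^2"]) (auto intro!: sum_nonneg)
    also have "\<dots> = fro2 A" unfolding fro2_def using A by simp
    finally have "fro2 A > 0" using ij(3) by (smt (verit) zero_less_power2)
    then show ?thesis unfolding F_def frob_fro2 by simp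
  qed
  obtain E lam where E: "E \<in> carrier_mat m k" and EE: "transpose_mat E * E = 1\<^sub>m k"
    and eig: "\<forall>i<k. (A * transpose_mat A) *\<^sub>v col E i = lam i \<cdot>\<^sub>v col E i \<and> lam i > 0"
    using eig_build[OF A, of k] k_le r_def by auto
  have colc: "col E i \<in> carrier_vec m" if "i < k" for i using E that by simp
  have colnz: "col E i \<noteq> 0\<^sub>v m" if i: "i < k" for i
  proof
    assume "col E i = 0\<^sub>v m"
    moreover have "col E i \<bullet> col E i = 1"
    proof -
      have "(transpose_mat E * E) $$ (i,i) = col E i \<bullet> col E i" using E i by simp
      then show ?thesis using EE i by simp
    qed
    ultimately show False by simp
  qed
  have k0: "0 < k" using k_ge by simp
  have sig: "sigma_min A > 0" using sigma_min_facts(1)[OF A colc[OF k0] colnz[OF k0]] eig k0 by blast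
  define s where "s = (sigma_min A)^2"
  have spos: "s > 0" unfolding s_def using sig by simp
  have slam: "\<forall>i<k. (A * transpose_mat A) *\<^sub>v col E i = lam i \<cdot>\<^sub>v col E i \<and> lam i \<ge> s"
    using sigma_min_facts(2)[OF A colc colnz] eig unfolding s_def by blast
  define kap where "kap = cond_num A"
  have kap: "kap = a / sigma_min A" unfolding kap_def cond_num_def a_def ..
  have kpos: "kap > 0" unfolding kap using apos sig by simp
  have s_eq: "a^2 / kap^2 = s" unfolding kap s_def using apos sig by (simp add: field_simps)
  define x0 where "x0 = theta * F^2"
  have x0pos: "x0 > 0" unfolding x0_def using theta_pos Fpos by simp
  have om0: "omega \<ge> 0" unfolding omega_def by (intro divide_nonneg_nonneg) auto
  define D where "D = 4 * real k + 3 + 2 * omega"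
  have Dpos: "D > 0" unfolding D_def using om0 by simp
  have key: "x0 * D \<le> omega * s"
  proof -
    have "omega * (spec_norm A)^2 / ((4 * real k + 3 + 2 * omega) * (cond_num A)^2 * (frob_norm A)^2)
        = omega * s / (D * F^2)"
      unfolding D_def F_def[symmetric] a_def[symmetric] kap_def[symmetric] s_eq[symmetric] using kpos Fpos
      by (simp add: field_simps)
    then have "theta \<le> omega * s / (D * F^2)" using theta_le by simp
    then have "theta * (D * F^2) \<le> omega * s" using Dpos Fpos by (simp add: pos_le_divide_eq)
    then show ?thesis unfolding x0_def by (simp add: algebra_simps)
  qed
  have two: "2 * x0 < s"
  proof -
    have "2 * x0 * D \<le> 2 * omega * s" using key by simp
    also have "\<dots> < D * s" using spos unfolding D_def by (intro mult_strict_right_mono) auto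
    finally have "(2 * x0) * D < s * D" by (simp add: algebra_simps)
    then show ?thesis using Dpos by simp
  qed
  have p0: "p > 0"
  proof -
    have "1 / (theta^2 * delta) > 0" using theta_pos delta by simp
    then have "\<lceil>1 / (theta^2 * delta)\<rceil> \<ge> 1" by (simp add: one_le_ceiling)
    then show ?thesis unfolding p_def by simp
  qed
  have S: "S \<in> carrier_mat m p" unfolding S_def sample_cols_def using A by simp
  have W: "W \<in> carrier_mat p p" unfolding W_def sample_rows_def using S by simp
  have FS: "frob_norm S \<le> F" unfolding S_def F_def by (rule sample_cols_frob[OF A p0 Fpos[unfolded F_def]])
  have e2: "frob_norm (transpose_mat S * S - transpose_mat W * W) \<le> x0"
  proof -
    have "(frob_norm S)^2 \<le> F^2" using FS frob_nonneg[of S] by (intro power_mono) auto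
    then have "theta * (frob_norm S)^2 \<le> x0" unfolding x0_def using theta_pos by simp
    then show ?thesis using E2 by simp
  qed
  have e1: "frob_norm (A * transpose_mat A - S * transpose_mat S) \<le> x0" using E1 unfolding x0_def F_def .
  have ray: "(s - x0) * ((E *\<^sub>v c) \<bullet> (E *\<^sub>v c)) \<le> (transpose_mat S *\<^sub>v (E *\<^sub>v c)) \<bullet> (transpose_mat S *\<^sub>v (E *\<^sub>v c))"
    if c: "c \<in> carrier_vec k" for c
  proof -
    define y where "y = E *\<^sub>v c"
    have yc: "y \<in> carrier_vec m" unfolding y_def using E c by simp
    have r1: "s * (y \<bullet> y) \<le> (transpose_mat A *\<^sub>v y) \<bullet> (transpose_mat A *\<^sub>v y)"
      unfolding y_def by (rule rayleigh_lower(1)[OF A E EE slam c])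
    have r2: "(transpose_mat A *\<^sub>v y) \<bullet> (transpose_mat A *\<^sub>v y)
        - frob_norm (A * transpose_mat A - S * transpose_mat S) * (y \<bullet> y)
        \<le> (transpose_mat S *\<^sub>v y) \<bullet> (transpose_mat S *\<^sub>v y)"
      using pert_lower[of "transpose_mat A" n m "transpose_mat S" p y] A S yc by simp
    have "frob_norm (A * transpose_mat A - S * transpose_mat S) * (y \<bullet> y) \<le> x0 * (y \<bullet> y)"
      using e1 sp_self_nonneg[of y] by (rule mult_right_mono)
    then show ?thesis using r1 r2 unfolding y_def[symmetric] by (simp add: algebra_simps)
  qed
  have Wb: "(S *\<^sub>v x) \<bullet> (S *\<^sub>v x) - x0 * (x \<bullet> x) \<le> (W *\<^sub>v x) \<bullet> (W *\<^sub>v x)" if x: "x \<in> carrier_vec p" for x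
  proof -
    have "(S *\<^sub>v x) \<bullet> (S *\<^sub>v x) - frob_norm (transpose_mat S * S - transpose_mat W * W) * (x \<bullet> x)
       \<le> (W *\<^sub>v x) \<bullet> (W *\<^sub>v x)" by (rule pert_lower[OF S W x])
    moreover have "frob_norm (transpose_mat S * S - transpose_mat W * W) * (x \<bullet> x) \<le> x0 * (x \<bullet> x)"
      using e2 sp_self_nonneg[of x] by (rule mult_right_mono)
    ultimately show ?thesis by simp
  qed
  have q: "s - x0 > 0" using two x0pos by simp
  have low: "k \<le> p \<and> (s - x0) - x0 \<le> (Df $$ (k - 1, k - 1))^2"
    by (rule sv_lower[OF S E EE k_ge ray q Wb Uf_dim Df_dim Vf_dim Uf_orth Vf_orth Df_diag Df_nonneg Df_sorted W_svd])
  define d where "d = Df $$ (k - 1, k - 1)"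
  have kp: "k \<le> p" using low by simp
  have d2: "s - 2 * x0 \<le> d^2" using low unfolding d_def by simp
  have d0: "d \<ge> 0" unfolding d_def using Df_nonneg kp k0 by simp
  have dpos: "d > 0"
  proof -
    have "d^2 > 0" using d2 two by linarith
    then show ?thesis using d0 by (simp add: less_le)
  qed
  have dmin: "d \<le> Df $$ (i,i)" if "i < k" for i unfolding d_def using Df_sorted that kp by simp
  have up: "Uhat \<in> carrier_mat m k"
      "fro2 (transpose_mat Uhat * Uhat - 1\<^sub>m k) \<le> fro2 (transpose_mat S * S - transpose_mat W * W) / (Df $$ (k-1,k-1))^4"
    using sv_upper[OF S kp k_ge Uf_dim Df_dim Vf_dim Uf_orth Vf_orth Df_diag W_svd _ _ V_def Uhat_def]
      dpos dmin unfolding d_def by auto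
  define fD where "fD = frob_norm (transpose_mat S * S - transpose_mat W * W)"
  have "frob_norm (transpose_mat Uhat * Uhat - 1\<^sub>m k) \<le> sqrt (fD^2 / d^4)"
  proof -
    have "fD^2 = fro2 (transpose_mat S * S - transpose_mat W * W)" unfolding fD_def by (rule frob_sq)
    then have "fro2 (transpose_mat Uhat * Uhat - 1\<^sub>m k) \<le> fD^2 / d^4" using up(2) unfolding d_def by simp
    then show ?thesis unfolding frob_fro2 by (rule real_sqrt_le_mono)
  qed
  also have "sqrt (fD^2 / d^4) = fD / d^2"
  proof -
    have "fD^2 / d^4 = (fD / d^2)^2" by (simp add: power_divide power_mult[symmetric])
    moreover have "fD / d^2 \<ge> 0" unfolding fD_def using frob_nonneg by simp
    ultimately show ?thesis by (metis real_sqrt_abs abs_of_nonneg)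
  qed
  also have "fD / d^2 \<le> x0 / (s - 2 * x0)"
    using e2 d2 two x0pos unfolding fD_def by (intro frac_le) (auto simp: frob_nonneg)
  also have "x0 / (s - 2 * x0) \<le> beta"
  proof -
    have "x0 * (4 * real k + 3) \<le> omega * (s - 2 * x0)" using key unfolding D_def by (simp add: algebra_simps)
    then show ?thesis unfolding beta_def using two by (simp add: field_simps)
  qed
  finally have Gb: "frob_norm (transpose_mat Uhat * Uhat - 1\<^sub>m k) \<le> beta" .
  have "Df $$ (k - 1, k - 1) > 0" using dpos unfolding d_def .
  then show ?thesis using final_bounds[OF up(1) k_ge Gb] by blast
qed

end
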